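(* Let $\Omega\subset\mathbb{R}^n$ be Lebesgue measurable with finite measure and let $f:L^2(\Omega)\to\mathbb{R}$ satisfy Assumption A with Lipschitz constant $L_f$ of $\nabla f$, and assume additionally that $\nabla f:L^2(\Omega)\to L^2(\Omega)$ is completely continuous. Let $\alpha>0$, $\beta>0$, $p\in(0,1)$, $b\in(0,\infty]$, and let $L$ satisfy $L_f<L\le(\tfrac2p-1)\alpha$. Let $u_0\in L^2(\Omega)$ and let $(u_k)$ be any sequence such that for every $k\ge0$, $u_{k+1}$ is a global minimizer of \[ \min_{u\in L^2(\Omega),\ |u(x)|\le b\text{ a.e.}}\ f(u_k)+\int_\Omega\nabla f(u_k)(u-u_k)\,dx+\frac L2\|u-u_k\|_{L^2(\Omega)}^2+\frac\alpha2\|u\|_{L^2(\Omega)}^2+\beta\int_\Omega|u(x)|^p\,dx . \] Then every weak sequential limit point $u^*\in L^2(\Omega)$ of $(u_k)$ is a strong sequential limit point of $(u_k)$ in $L^1(\Omega)$.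
   Context: Assumption A: $f:L^2(\Omega)\to\mathbb{R}$ is bounded from below, weakly lower semicontinuous, Fréchet differentiable, and $\nabla f:L^2(\Omega)\to L^2(\Omega)$ is Lipschitz continuous with constant $L_f$. Completely continuous means: $u_n\rightharpoonup u$ weakly in $L^2(\Omega)$ implies $\nabla f(u_n)\to\nabla f(u)$ strongly in $L^2(\Omega)$. For $b=\infty$ the constraint $|u|\le b$ is void. *)

theory Defs
  imports "HOL-Analysis.Analysis"
begin

(* L^2(Omega) represented by square-integrable Lebesgue measurable representatives
   u :: 'a => real on the measure space lebesgue_on Omega. *)
definition L2 :: "'a::euclidean_space set \<Rightarrow> ('a \<Rightarrow> real) set" where
  "L2 \<Omega> = {u. u \<in> borel_measurable (lebesgue_on \<Omega>) \<and>
                integrable (lebesgue_on \<Omega>) (\<lambda>x. (u x)\<^sup>2)}"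

definition l2_inner :: "'a::euclidean_space set \<Rightarrow> ('a \<Rightarrow> real) \<Rightarrow> ('a \<Rightarrow> real) \<Rightarrow> real" where
  "l2_inner \<Omega> u v = (LINT x|lebesgue_on \<Omega>. u x * v x)"

definition l2_norm :: "'a::euclidean_space set \<Rightarrow> ('a \<Rightarrow> real) \<Rightarrow> real" where
  "l2_norm \<Omega> u = sqrt (LINT x|lebesgue_on \<Omega>. (u x)\<^sup>2)"

definition l1_dist :: "'a::euclidean_space set \<Rightarrow> ('a \<Rightarrow> real) \<Rightarrow> ('a \<Rightarrow> real) \<Rightarrow> real" where
  "l1_dist \<Omega> u v = (LINT x|lebesgue_on \<Omega>. \<bar>u x - v x\<bar>)"

definition weak_conv_L2 :: "'a::euclidean_space set \<Rightarrow> (nat \<Rightarrow> 'a \<Rightarrow> real) \<Rightarrow> ('a \<Rightarrow> real) \<Rightarrow> bool" where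
  "weak_conv_L2 \<Omega> us u \<longleftrightarrow> (\<forall>n. us n \<in> L2 \<Omega>) \<and> u \<in> L2 \<Omega> \<and>
     (\<forall>v\<in>L2 \<Omega>. (\<lambda>n. l2_inner \<Omega> (us n) v) \<longlonglongrightarrow> l2_inner \<Omega> u v)"

definition assumption_A ::
  "'a::euclidean_space set \<Rightarrow> (('a \<Rightarrow> real) \<Rightarrow> real) \<Rightarrow> (('a \<Rightarrow> real) \<Rightarrow> 'a \<Rightarrow> real) \<Rightarrow> real \<Rightarrow> bool" where
  "assumption_A \<Omega> f g Lf \<longleftrightarrow>
     (\<exists>c. \<forall>u\<in>L2 \<Omega>. c \<le> f u) \<and>
     (\<forall>us u. weak_conv_L2 \<Omega> us u \<longrightarrow> ereal (f u) \<le> liminf (\<lambda>n. ereal (f (us n)))) \<and>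
     (\<forall>u\<in>L2 \<Omega>. g u \<in> L2 \<Omega> \<and>
        (\<forall>\<epsilon>>0. \<exists>\<delta>>0. \<forall>v\<in>L2 \<Omega>. l2_norm \<Omega> (\<lambda>x. v x - u x) < \<delta> \<longrightarrow>
            \<bar>f v - f u - l2_inner \<Omega> (g u) (\<lambda>x. v x - u x)\<bar> \<le> \<epsilon> * l2_norm \<Omega> (\<lambda>x. v x - u x))) \<and>
     (\<forall>u\<in>L2 \<Omega>. \<forall>v\<in>L2 \<Omega>.
        l2_norm \<Omega> (\<lambda>x. g u x - g v x) \<le> Lf * l2_norm \<Omega> (\<lambda>x. u x - v x))"

definition completely_continuous ::
  "'a::euclidean_space set \<Rightarrow> (('a \<Rightarrow> real) \<Rightarrow> 'a \<Rightarrow> real) \<Rightarrow> bool" where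
  "completely_continuous \<Omega> g \<longleftrightarrow>
     (\<forall>us u. weak_conv_L2 \<Omega> us u \<longrightarrow> (\<lambda>n. l2_norm \<Omega> (\<lambda>x. g (us n) x - g u x)) \<longlonglongrightarrow> 0)"

definition subproblem_obj ::
  "'a::euclidean_space set \<Rightarrow> (('a \<Rightarrow> real) \<Rightarrow> real) \<Rightarrow> (('a \<Rightarrow> real) \<Rightarrow> 'a \<Rightarrow> real) \<Rightarrow>
   real \<Rightarrow> real \<Rightarrow> real \<Rightarrow> real \<Rightarrow> ('a \<Rightarrow> real) \<Rightarrow> ('a \<Rightarrow> real) \<Rightarrow> real" where
  "subproblem_obj \<Omega> f g L \<alpha> \<beta> p w u =
     f w + l2_inner \<Omega> (g w) (\<lambda>x. u x - w x) + L / 2 * (l2_norm \<Omega> (\<lambda>x. u x - w x))\<^sup>2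
     + \<alpha> / 2 * (l2_norm \<Omega> u)\<^sup>2 + \<beta> * (LINT x|lebesgue_on \<Omega>. \<bar>u x\<bar> powr p)"

(* admissible set; b = \<infinity> means no constraint *)
definition admissible :: "'a::euclidean_space set \<Rightarrow> ereal \<Rightarrow> ('a \<Rightarrow> real) set" where
  "admissible \<Omega> b = {u \<in> L2 \<Omega>. AE x in lebesgue_on \<Omega>. ereal \<bar>u x\<bar> \<le> b}"

end

theory Submission
  imports Defs "HOL-Library.Infinite_Set"
begin


abbreviation NN :: "'a::euclidean_space set \<Rightarrow> ('a \<Rightarrow> real) \<Rightarrow> real" where
  "NN \<Omega> u \<equiv> (LINT x|lebesgue_on \<Omega>. (u x)\<^sup>2)"

lemma abs_mult_le_sq: "\<bar>a*b\<bar> \<le> a\<^sup>2 + (b::real)\<^sup>2"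
proof -
  have "0 \<le> (\<bar>a\<bar> - \<bar>b\<bar>)\<^sup>2" by simp
  then have "2*\<bar>a\<bar>*\<bar>b\<bar> \<le> a\<^sup>2 + b\<^sup>2" by (simp add: power2_eq_square algebra_simps)
  moreover have "a\<^sup>2 \<ge> 0" "b\<^sup>2 \<ge> 0" by simp_all
  ultimately have "\<bar>a\<bar>*\<bar>b\<bar> \<le> a\<^sup>2 + b\<^sup>2" by linarith
  then show ?thesis by (simp add: abs_mult)
qed

context
  fixes \<Omega> :: "'a::euclidean_space set"
  assumes fin: "finite_measure (lebesgue_on \<Omega>)"
begin

lemma L2_meas: "u \<in> L2 \<Omega> \<Longrightarrow> u \<in> borel_measurable (lebesgue_on \<Omega>)"
  by (simp add: L2_def)

lemma L2_sq: "u \<in> L2 \<Omega> \<Longrightarrow> integrable (lebesgue_on \<Omega>) (\<lambda>x. (u x)\<^sup>2)"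
  by (simp add: L2_def)

lemma L2_int: "u \<in> L2 \<Omega> \<Longrightarrow> integrable (lebesgue_on \<Omega>) u"
  using finite_measure.square_integrable_imp_integrable[OF fin] L2_sq L2_meas by blast

lemma L2_prod: assumes "u \<in> L2 \<Omega>" "v \<in> L2 \<Omega>"
  shows "integrable (lebesgue_on \<Omega>) (\<lambda>x. u x * v x)"
proof (rule Bochner_Integration.integrable_bound[where f="\<lambda>x. (u x)\<^sup>2 + (v x)\<^sup>2"])
  show "integrable (lebesgue_on \<Omega>) (\<lambda>x. (u x)\<^sup>2 + (v x)\<^sup>2)"
    using assms L2_sq by auto
  show "(\<lambda>x. u x * v x) \<in> borel_measurable (lebesgue_on \<Omega>)" using assms L2_meas by (intro borel_measurable_times) auto
  show "AE x in lebesgue_on \<Omega>. norm (u x * v x) \<le> norm ((u x)\<^sup>2 + (v x)\<^sup>2)"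
  proof (rule AE_I2)
    fix x
    show "norm (u x * v x) \<le> norm ((u x)\<^sup>2 + (v x)\<^sup>2)"
      using abs_mult_le_sq[of "u x" "v x"] by simp
  qed
qed

lemma L2_lin: assumes "u \<in> L2 \<Omega>" "v \<in> L2 \<Omega>"
  shows "(\<lambda>x. a * u x + c * v x) \<in> L2 \<Omega>"
proof -
  have e: "(\<lambda>x. (a * u x + c * v x)\<^sup>2) = (\<lambda>x. a\<^sup>2 * (u x)\<^sup>2 + (2*a*c) * (u x * v x) + c\<^sup>2 * (v x)\<^sup>2)"
    by (auto simp: power2_eq_square algebra_simps)
  have [measurable]: "u \<in> borel_measurable (lebesgue_on \<Omega>)" "v \<in> borel_measurable (lebesgue_on \<Omega>)"
    using assms by (auto simp: L2_def)
  show ?thesis unfolding L2_def using assms L2_sq L2_prod[OF assms]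
    by (auto simp: e)
qed

lemma L2_diff: "u \<in> L2 \<Omega> \<Longrightarrow> v \<in> L2 \<Omega> \<Longrightarrow> (\<lambda>x. u x - v x) \<in> L2 \<Omega>"
  using L2_lin[of u v 1 "-1"] by simp

lemma L2_add: "u \<in> L2 \<Omega> \<Longrightarrow> v \<in> L2 \<Omega> \<Longrightarrow> (\<lambda>x. u x + v x) \<in> L2 \<Omega>"
  using L2_lin[of u v 1 1] by simp

lemma L2_const: "(\<lambda>x. c) \<in> L2 \<Omega>"
  unfolding L2_def using finite_measure.integrable_const[OF fin] by auto

lemma L2_scale: "u \<in> L2 \<Omega> \<Longrightarrow> (\<lambda>x. a * u x) \<in> L2 \<Omega>"
  using L2_lin[of u u a 0] by simp

lemma L2_zero: "(\<lambda>x. 0) \<in> L2 \<Omega>" using L2_const .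

lemma NN_nonneg: "NN \<Omega> u \<ge> 0" by simp

lemma l2_norm_sq: "(l2_norm \<Omega> u)\<^sup>2 = NN \<Omega> u"
  by (simp add: l2_norm_def)

lemma CS_sq: assumes "u \<in> L2 \<Omega>" "v \<in> L2 \<Omega>"
  shows "(l2_inner \<Omega> u v)\<^sup>2 \<le> NN \<Omega> u * NN \<Omega> v"
proof -
  define A where "A = NN \<Omega> u"
  define B where "B = NN \<Omega> v"
  define C where "C = l2_inner \<Omega> u v"
  have q: "0 \<le> t\<^sup>2 * A - 2 * t * C + B" for t
  proof -
    have "(\<lambda>x. (t * u x - v x)\<^sup>2) = (\<lambda>x. t\<^sup>2 * (u x)\<^sup>2 - (2*t) * (u x * v x) + (v x)\<^sup>2)"
      by (auto simp: power2_eq_square algebra_simps)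
    then have "(LINT x|lebesgue_on \<Omega>. (t * u x - v x)\<^sup>2) = t\<^sup>2 * A - 2 * t * C + B"
      using assms L2_sq L2_prod[OF assms]
      by (simp add: A_def B_def C_def l2_inner_def)
    moreover have "0 \<le> (LINT x|lebesgue_on \<Omega>. (t * u x - v x)\<^sup>2)" by simp
    ultimately show ?thesis by simp
  qed
  have A0: "A \<ge> 0" by (simp add: A_def)
  show ?thesis
  proof (cases "A = 0")
    case True
    have "C = 0"
    proof (rule ccontr)
      assume "C \<noteq> 0"
      have "0 \<le> (B + 1) / (2*C)\<^sup>2 * 0 - 2 * ((B+1)/(2*C)) * C + B" using q[of "(B+1)/(2*C)"] True by simp
      then show False using \<open>C \<noteq> 0\<close> by (simp add: field_simps)
    qed
    then show ?thesis by (simp add: A_def B_def C_def True[unfolded A_def])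
  next
    case False
    then have "A > 0" using A0 by simp
    have "0 \<le> (C/A)\<^sup>2 * A - 2 * (C/A) * C + B" by (rule q)
    then have "0 \<le> B - C\<^sup>2 / A" using \<open>A > 0\<close> by (simp add: power2_eq_square field_simps)
    then have "C\<^sup>2 \<le> A * B" using \<open>A > 0\<close> by (simp add: field_simps)
    then show ?thesis by (simp add: A_def B_def C_def)
  qed
qed

lemma CS: assumes "u \<in> L2 \<Omega>" "v \<in> L2 \<Omega>"
  shows "\<bar>l2_inner \<Omega> u v\<bar> \<le> l2_norm \<Omega> u * l2_norm \<Omega> v"
proof -
  have "\<bar>l2_inner \<Omega> u v\<bar> = sqrt ((l2_inner \<Omega> u v)\<^sup>2)" by simp
  also have "\<dots> \<le> sqrt (NN \<Omega> u * NN \<Omega> v)" using CS_sq[OF assms] real_sqrt_le_mono by blast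
  finally show ?thesis by (simp add: l2_norm_def real_sqrt_mult)
qed

end


lemma inner_scale_right: "l2_inner \<Omega> a (\<lambda>x. h * d x) = h * l2_inner \<Omega> a d"
  unfolding l2_inner_def by (simp add: mult.left_commute)

lemma inner_scale_left: "l2_inner \<Omega> (\<lambda>x. h * d x) a = h * l2_inner \<Omega> d a"
  unfolding l2_inner_def by (simp add: mult.assoc)

lemma NN_scale: "NN \<Omega> (\<lambda>x. h * d x) = h\<^sup>2 * NN \<Omega> d"
  by (simp add: power_mult_distrib)

lemma norm_scale: "l2_norm \<Omega> (\<lambda>x. h * d x) = \<bar>h\<bar> * l2_norm \<Omega> d"
  unfolding l2_norm_def by (simp add: power_mult_distrib real_sqrt_mult)

lemma l2_norm_nonneg: "l2_norm \<Omega> u \<ge> 0"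
  unfolding l2_norm_def by simp

context
  fixes \<Omega> :: "'a::euclidean_space set"
  assumes fin: "finite_measure (lebesgue_on \<Omega>)"
begin

lemma inner_diff_right: "a \<in> L2 \<Omega> \<Longrightarrow> u \<in> L2 \<Omega> \<Longrightarrow> v \<in> L2 \<Omega> \<Longrightarrow>
  l2_inner \<Omega> a (\<lambda>x. u x - v x) = l2_inner \<Omega> a u - l2_inner \<Omega> a v"
  unfolding l2_inner_def using L2_prod[OF fin, of a u] L2_prod[OF fin, of a v]
  by (simp add: right_diff_distrib)

lemma inner_diff_left: "a \<in> L2 \<Omega> \<Longrightarrow> u \<in> L2 \<Omega> \<Longrightarrow> v \<in> L2 \<Omega> \<Longrightarrow>
  l2_inner \<Omega> (\<lambda>x. u x - v x) a = l2_inner \<Omega> u a - l2_inner \<Omega> v a"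
  unfolding l2_inner_def using L2_prod[OF fin, of u a] L2_prod[OF fin, of v a]
  by (simp add: left_diff_distrib)

lemma inner_add_right: "a \<in> L2 \<Omega> \<Longrightarrow> u \<in> L2 \<Omega> \<Longrightarrow> v \<in> L2 \<Omega> \<Longrightarrow>
  l2_inner \<Omega> a (\<lambda>x. u x + v x) = l2_inner \<Omega> a u + l2_inner \<Omega> a v"
  unfolding l2_inner_def using L2_prod[OF fin, of a u] L2_prod[OF fin, of a v]
  by (simp add: distrib_left)

lemma frechet_line:
  assumes A: "assumption_A \<Omega> f g Lf" and w: "w \<in> L2 \<Omega>" and d: "d \<in> L2 \<Omega>"
  shows "((\<lambda>s. f (\<lambda>x. w x + s * d x)) has_real_derivative l2_inner \<Omega> (g w) d) (at 0)"
proof -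
  define D where "D = l2_inner \<Omega> (g w) d"
  define nd where "nd = l2_norm \<Omega> d"
  have nd0: "nd \<ge> 0" unfolding nd_def by (rule l2_norm_nonneg)
  have gw: "g w \<in> L2 \<Omega>" using A w unfolding assumption_A_def by blast
  have fr: "\<forall>\<epsilon>>0. \<exists>\<delta>>0. \<forall>v\<in>L2 \<Omega>. l2_norm \<Omega> (\<lambda>x. v x - w x) < \<delta> \<longrightarrow>
            \<bar>f v - f w - l2_inner \<Omega> (g w) (\<lambda>x. v x - w x)\<bar> \<le> \<epsilon> * l2_norm \<Omega> (\<lambda>x. v x - w x)"
    using A w unfolding assumption_A_def by blast
  have w0: "(\<lambda>x. w x + 0 * d x) = w" by simp
  show ?thesis unfolding DERIV_def w0 D_def[symmetric]
  proof (rule tendstoI)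
    fix \<epsilon> :: real assume "\<epsilon> > 0"
    define e where "e = \<epsilon> / (2 * (nd + 1))"
    have e0: "e > 0" using \<open>\<epsilon> > 0\<close> nd0 unfolding e_def by (intro divide_pos_pos) auto
    obtain \<delta> where \<delta>: "\<delta> > 0" and H: "\<And>v. v \<in> L2 \<Omega> \<Longrightarrow> l2_norm \<Omega> (\<lambda>x. v x - w x) < \<delta> \<Longrightarrow>
            \<bar>f v - f w - l2_inner \<Omega> (g w) (\<lambda>x. v x - w x)\<bar> \<le> e * l2_norm \<Omega> (\<lambda>x. v x - w x)"
      using fr e0 by meson
    show "\<forall>\<^sub>F h in at 0. dist ((f (\<lambda>x. w x + (0 + h) * d x) - f w) / h) D < \<epsilon>"
      unfolding eventually_at
    proof (intro exI[of _ "\<delta> / (nd + 1)"] conjI ballI impI)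
      show "\<delta> / (nd + 1) > 0" using \<delta> nd0 by simp
      fix h :: real assume "h \<in> UNIV" and hh: "h \<noteq> 0 \<and> dist h 0 < \<delta> / (nd + 1)"
      define v where "v = (\<lambda>x. w x + h * d x)"
      have vL: "v \<in> L2 \<Omega>" unfolding v_def using L2_lin[OF fin w d, of 1 h] by simp
      have vw: "(\<lambda>x. v x - w x) = (\<lambda>x. h * d x)" unfolding v_def by simp
      have "\<bar>h\<bar> * nd \<le> \<bar>h\<bar> * (nd + 1)" using nd0 by (simp add: mult_left_mono)
      also have "\<bar>h\<bar> * (nd + 1) < \<delta>" using hh nd0 by (simp add: field_simps)
      finally have lt: "l2_norm \<Omega> (\<lambda>x. v x - w x) < \<delta>" unfolding vw norm_scale nd_def .
      have "\<bar>f v - f w - h * D\<bar> \<le> e * (\<bar>h\<bar> * nd)"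
        using H[OF vL lt] unfolding vw norm_scale inner_scale_right D_def nd_def .
      then have "\<bar>(f v - f w) / h - D\<bar> \<le> e * nd"
        using hh by (simp add: field_simps abs_divide abs_mult)  
      also have "e * nd < \<epsilon>"
      proof -
        have "\<epsilon> * nd \<ge> 0" using \<open>\<epsilon> > 0\<close> nd0 by simp
        then have "0 < \<epsilon> * nd + \<epsilon> * 2" using \<open>\<epsilon> > 0\<close> by linarith
        then show ?thesis using \<open>\<epsilon> > 0\<close> nd0 unfolding e_def by (simp add: field_simps)
      qed
      finally show "dist ((f (\<lambda>x. w x + (0 + h) * d x) - f w) / h) D < \<epsilon>"
        by (simp add: dist_real_def v_def)
    qed
  qed
qed

lemma descent:
  assumes A: "assumption_A \<Omega> f g Lf" and u: "u \<in> L2 \<Omega>" and v: "v \<in> L2 \<Omega>"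
  shows "f v \<le> f u + l2_inner \<Omega> (g u) (\<lambda>x. v x - u x) + Lf / 2 * NN \<Omega> (\<lambda>x. v x - u x)"
proof -
  define d where "d = (\<lambda>x. v x - u x)"
  have d: "d \<in> L2 \<Omega>" unfolding d_def using L2_diff[OF fin v u] .
  define z where "z = (\<lambda>s x. u x + s * d x)"
  have z: "z s \<in> L2 \<Omega>" for s unfolding z_def using L2_lin[OF fin u d, of 1 s] by simp
  have gL: "\<And>w. w \<in> L2 \<Omega> \<Longrightarrow> g w \<in> L2 \<Omega>" using A unfolding assumption_A_def by blast
  have lip: "\<And>w w'. w \<in> L2 \<Omega> \<Longrightarrow> w' \<in> L2 \<Omega> \<Longrightarrow>
      l2_norm \<Omega> (\<lambda>x. g w x - g w' x) \<le> Lf * l2_norm \<Omega> (\<lambda>x. w x - w' x)"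
    using A unfolding assumption_A_def by blast
  define D where "D = (\<lambda>s. l2_inner \<Omega> (g (z s)) d)"
  have der: "((\<lambda>s. f (z s)) has_real_derivative D s) (at s)" for s
  proof -
    have "((\<lambda>h. f (\<lambda>x. z s x + h * d x)) has_real_derivative D s) (at 0)"
      unfolding D_def by (rule frechet_line[OF A z d])
    moreover have "(\<lambda>x. z s x + h * d x) = z (h + s)" for h
      unfolding z_def by (auto simp: algebra_simps)
    ultimately have "((\<lambda>h. f (z (h + s))) has_real_derivative D s) (at 0)" by simp
    then have "((\<lambda>t. f (z t)) has_real_derivative D s) (at (0 + s))"
      using DERIV_shift[of "\<lambda>t. f (z t)" "D s" 0 s] by blast
    then show ?thesis unfolding add_0_left .
  qed
  define \<psi> where "\<psi> = (\<lambda>s. f (z s) - s * l2_inner \<Omega> (g u) d - Lf / 2 * s\<^sup>2 * NN \<Omega> d)"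
  have "\<psi> 0 \<ge> \<psi> 1"
  proof (rule DERIV_nonpos_imp_nonincreasing[of 0 1 \<psi>])
    show "(0::real) \<le> 1" by simp
  next
    fix s :: real assume s: "0 \<le> s" "s \<le> 1"
    have "(\<psi> has_real_derivative (D s - l2_inner \<Omega> (g u) d - Lf / 2 * (2 * s) * NN \<Omega> d)) (at s)"
      unfolding \<psi>_def
      by (rule derivative_eq_intros der[of s] | simp)+
    moreover have "D s - l2_inner \<Omega> (g u) d - Lf / 2 * (2 * s) * NN \<Omega> d \<le> 0"
    proof -
      have zu: "(\<lambda>x. z s x - u x) = (\<lambda>x. s * d x)" unfolding z_def by simp
      have "D s - l2_inner \<Omega> (g u) d = l2_inner \<Omega> (\<lambda>x. g (z s) x - g u x) d"
        unfolding D_def using inner_diff_left[OF d gL[OF z] gL[OF u]] by simp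
      also have "\<dots> \<le> l2_norm \<Omega> (\<lambda>x. g (z s) x - g u x) * l2_norm \<Omega> d"
        using CS[OF fin L2_diff[OF fin gL[OF z] gL[OF u]] d] by (rule order_trans[OF abs_ge_self])
      also have "\<dots> \<le> (Lf * l2_norm \<Omega> (\<lambda>x. z s x - u x)) * l2_norm \<Omega> d"
        by (intro mult_right_mono lip z u l2_norm_nonneg)
      also have "\<dots> = Lf * s * (l2_norm \<Omega> d)\<^sup>2"
        unfolding zu norm_scale using s by (simp add: power2_eq_square)
      also have "\<dots> = Lf / 2 * (2 * s) * NN \<Omega> d" by (simp add: l2_norm_sq[OF fin])
      finally show ?thesis by simp
    qed
    ultimately show "\<exists>y. (\<psi> has_real_derivative y) (at s) \<and> y \<le> 0" by blast
  qed
  moreover have "z 0 = u" "z 1 = v" unfolding z_def d_def by auto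
  ultimately show ?thesis unfolding \<psi>_def d_def by simp
qed

end


definition Ms :: "real \<Rightarrow> real \<Rightarrow> real \<Rightarrow> real \<Rightarrow> ereal \<Rightarrow> real \<Rightarrow> real set" where
  "Ms L \<alpha> \<beta> p b c = {s. ereal \<bar>s\<bar> \<le> b \<and> (\<forall>t. ereal \<bar>t\<bar> \<le> b \<longrightarrow>
      0 \<le> \<beta> * (\<bar>t\<bar> powr p - \<bar>s\<bar> powr p) + (\<alpha> * s - c) * (t - s) + (L + \<alpha>) / 2 * (t - s)\<^sup>2)}"

definition tau :: "real \<Rightarrow> real \<Rightarrow> real \<Rightarrow> real \<Rightarrow> real" where
  "tau L \<alpha> \<beta> p = (2 * \<beta> * (1 - p) / (L + \<alpha>)) powr (1 / (2 - p))"

definition m0 :: "real \<Rightarrow> real \<Rightarrow> real \<Rightarrow> real \<Rightarrow> ereal \<Rightarrow> real" where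
  "m0 L \<alpha> \<beta> p b = (if b = \<infinity> then tau L \<alpha> \<beta> p else min (tau L \<alpha> \<beta> p) (real_of_ereal b))"

locale sc =
  fixes L \<alpha> \<beta> p :: real and b :: ereal
  assumes \<alpha>0: "\<alpha> > 0" and \<beta>0: "\<beta> > 0" and p0: "0 < p" and p1: "p < 1" and L0: "L > 0"
    and Lb: "L \<le> (2 / p - 1) * \<alpha>" and b0: "b > 0"
begin

abbreviation "M \<equiv> Ms L \<alpha> \<beta> p b"
abbreviation "\<tau> \<equiv> tau L \<alpha> \<beta> p"
abbreviation "m \<equiv> m0 L \<alpha> \<beta> p b"

lemma Ms_iff: "s \<in> M c \<longleftrightarrow> ereal \<bar>s\<bar> \<le> b \<and> (\<forall>t. ereal \<bar>t\<bar> \<le> b \<longrightarrow>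
      0 \<le> \<beta> * (\<bar>t\<bar> powr p - \<bar>s\<bar> powr p) + (\<alpha> * s - c) * (t - s) + (L + \<alpha>) / 2 * (t - s)\<^sup>2)"
  unfolding Ms_def by simp

lemma tau_pos: "\<tau> > 0"
  unfolding tau_def using \<alpha>0 \<beta>0 p1 L0 by simp

lemma m_pos: "m > 0"
proof (cases b)
  case (real r) then show ?thesis using tau_pos b0 by (simp add: m0_def)
qed (use tau_pos b0 in \<open>auto simp: m0_def\<close>)

lemma Q_deriv:
  assumes "s > 0"
  shows "((\<lambda>t. \<beta> * (t powr p - s powr p) + (\<alpha> * s - c) * (t - s) + (L + \<alpha>) / 2 * (t - s)\<^sup>2)
     has_real_derivative (\<beta> * p * s powr (p - 1) + (\<alpha> * s - c))) (at s)"
proof -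
  have d1: "((\<lambda>t. t powr p) has_real_derivative p * s powr (p - 1)) (at s)"
    by (rule has_real_derivative_powr) (use assms in simp)
  show ?thesis
    by (rule derivative_eq_intros d1 | simp)+
qed

lemma deriv_eq:
  assumes sM: "s \<in> M c" and s0: "0 < s" and sb: "ereal s < b"
  shows "c = \<alpha> * s + \<beta> * p * s powr (p - 1)"
proof -
  define Q where "Q = (\<lambda>t. \<beta> * (t powr p - s powr p) + (\<alpha> * s - c) * (t - s) + (L + \<alpha>) / 2 * (t - s)\<^sup>2)"
  obtain d where d0: "d > 0" and dd: "\<And>y. \<bar>s - y\<bar> < d \<Longrightarrow> ereal \<bar>y\<bar> \<le> b \<and> y > 0"
  proof (cases b)
    case (real r)
    then have "s < r" using sb by simp
    show ?thesis
      by (rule that[of "min s (r - s)"]) (use \<open>s < r\<close> s0 real in auto)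
  next
    case PInf
    show ?thesis by (rule that[of s]) (use s0 PInf in auto)
  next
    case MInf then show ?thesis using b0 by simp
  qed
  have "\<beta> * p * s powr (p - 1) + (\<alpha> * s - c) = 0"
  proof (rule DERIV_local_min[OF Q_deriv[OF s0, of c, folded Q_def] d0], intro allI impI)
    fix y assume "\<bar>s - y\<bar> < d"
    then have y: "ereal \<bar>y\<bar> \<le> b" "y > 0" using dd by auto
    then have "0 \<le> \<beta> * (\<bar>y\<bar> powr p - \<bar>s\<bar> powr p) + (\<alpha> * s - c) * (y - s) + (L + \<alpha>) / 2 * (y - s)\<^sup>2"
      using sM unfolding Ms_iff by blast
    then show "Q s \<le> Q y" using y s0 by (simp add: Q_def)
  qed
  then show ?thesis by simp
qed

lemma deriv_le:
  assumes sM: "s \<in> M c" and s0: "0 < s" and sb: "ereal s = b"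
  shows "\<alpha> * s + \<beta> * p * s powr (p - 1) \<le> c"
proof (rule ccontr)
  assume "\<not> ?thesis"
  then have pos: "0 < \<beta> * p * s powr (p - 1) + (\<alpha> * s - c)" by simp
  define Q where "Q = (\<lambda>t. \<beta> * (t powr p - s powr p) + (\<alpha> * s - c) * (t - s) + (L + \<alpha>) / 2 * (t - s)\<^sup>2)"
  obtain d where d0: "d > 0" and dd: "\<And>h. h > 0 \<Longrightarrow> h < d \<Longrightarrow> Q (s - h) < Q s"
    using DERIV_pos_inc_left[OF Q_deriv[OF s0, of c, folded Q_def] pos] by blast
  define h where "h = min (d/2) (s/2)"
  have h: "h > 0" "h < d" "h < s" using d0 s0 by (auto simp: h_def)
  have "Q (s - h) < 0" using dd[OF h(1,2)] by (simp add: Q_def)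
  moreover have "ereal \<bar>s - h\<bar> \<le> ereal s" using h by simp
  then have "ereal \<bar>s - h\<bar> \<le> b" using sb by simp
  then have "0 \<le> \<beta> * (\<bar>s - h\<bar> powr p - \<bar>s\<bar> powr p) + (\<alpha> * s - c) * ((s - h) - s) + (L + \<alpha>) / 2 * ((s - h) - s)\<^sup>2"
    using sM unfolding Ms_iff by blast
  then have "0 \<le> Q (s - h)" using h s0 by (simp add: Q_def)
  ultimately show False by simp
qed

lemma tau_le:
  assumes sM: "s \<in> M c" and s0: "0 < s" and sb: "ereal s < b"
  shows "\<tau> \<le> s"
proof -
  have c: "c = \<alpha> * s + \<beta> * p * s powr (p - 1)" by (rule deriv_eq[OF assms])
  have "ereal \<bar>0\<bar> \<le> b" using b0 unfolding zero_ereal_def by (simp add: less_imp_le)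
  then have "0 \<le> \<beta> * (\<bar>0\<bar> powr p - \<bar>s\<bar> powr p) + (\<alpha> * s - c) * (0 - s) + (L + \<alpha>) / 2 * (0 - s)\<^sup>2"
    using sM unfolding Ms_iff by blast
  moreover have "s powr (p - 1) * s = s powr p"
    using s0 powr_add[of s "p - 1" 1] by simp
  moreover have sq: "s\<^sup>2 = s powr p * s powr (2 - p)"
    using s0 powr_add[of s p "2 - p"] by (simp add: powr_numeral)
  ultimately have "0 \<le> - \<beta> * s powr p + \<beta> * p * s powr p + (L + \<alpha>) / 2 * (s powr p * s powr (2 - p))"
    using s0 p0 by (simp add: c algebra_simps power2_eq_square)
  then have "0 \<le> s powr p * (- \<beta> * (1 - p) + (L + \<alpha>) / 2 * s powr (2 - p))"
    by (simp add: algebra_simps)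
  then have "0 \<le> - \<beta> * (1 - p) + (L + \<alpha>) / 2 * s powr (2 - p)"
    using s0 by (simp add: zero_le_mult_iff)
  then have K: "2 * \<beta> * (1 - p) / (L + \<alpha>) \<le> s powr (2 - p)"
    using L0 \<alpha>0 by (simp add: field_simps)
  have "\<tau> \<le> (s powr (2 - p)) powr (1 / (2 - p))"
    unfolding tau_def by (rule powr_mono2) (use K p1 \<beta>0 L0 \<alpha>0 in auto)
  also have "\<dots> = s" using p1 s0 by (simp add: powr_powr)
  finally show ?thesis .
qed

lemma pos_ge_m:
  assumes sM: "s \<in> M c" and s0: "0 < s"
  shows "m \<le> s"
proof -
  have sb: "ereal s \<le> b" using sM s0 unfolding Ms_iff by simp
  show ?thesis
  proof (cases "ereal s < b")
    case True
    then have "\<tau> \<le> s" by (rule tau_le[OF sM s0])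
    then show ?thesis by (auto simp: m0_def)
  next
    case False
    then have "ereal s = b" using sb by simp
    then show ?thesis by (auto simp: m0_def)
  qed
qed

lemma pos_lt_c:
  assumes sM: "s \<in> M c" and s0: "0 < s"
  shows "\<alpha> * s < c"
proof -
  have sb: "ereal s \<le> b" using sM s0 unfolding Ms_iff by simp
  have "\<alpha> * s + \<beta> * p * s powr (p - 1) \<le> c"
  proof (cases "ereal s < b")
    case True then show ?thesis using deriv_eq[OF sM s0] by simp
  next
    case False then show ?thesis using deriv_le[OF sM s0] sb by simp
  qed
  moreover have "\<beta> * p * s powr (p - 1) > 0" using \<beta>0 p0 s0 by simp
  ultimately show ?thesis by linarith
qed

end


context sc
begin

lemma uniq_lt:
  assumes s1: "s1 \<in> M c" and s2: "s2 \<in> M c" and p1': "0 < s1" and lt: "s1 < s2"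
  shows False
proof -
  have s20: "s2 > 0" using p1' lt by simp
  have "ereal s2 \<le> b" using s2 s20 unfolding Ms_iff by simp
  moreover have "ereal s1 < ereal s2" using lt by simp
  ultimately have s1b: "ereal s1 < b" by (rule order_less_le_trans[rotated])
  have c1: "c = \<alpha> * s1 + \<beta> * p * s1 powr (p - 1)" by (rule deriv_eq[OF s1 p1' s1b])
  have t1: "\<tau> \<le> s1" by (rule tau_le[OF s1 p1' s1b])
  have c2: "\<alpha> * s2 + \<beta> * p * s2 powr (p - 1) \<le> c"
  proof (cases "ereal s2 < b")
    case True then show ?thesis using deriv_eq[OF s2 s20] by simp
  next
    case False then show ?thesis using deriv_le[OF s2 s20] \<open>ereal s2 \<le> b\<close> by simp
  qed
  define h where "h = (\<lambda>x. \<alpha> * x + \<beta> * p * x powr (p - 1))"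
  have hd: "(h has_real_derivative (\<alpha> + \<beta> * p * ((p - 1) * x powr (p - 1 - 1)))) (at x)" if "x > 0" for x
  proof -
    have d1: "((\<lambda>t. t powr (p - 1)) has_real_derivative (p - 1) * x powr (p - 1 - 1)) (at x)"
      by (rule has_real_derivative_powr) (use that in simp)
    show ?thesis unfolding h_def by (rule derivative_eq_intros d1 | simp)+
  qed
  define K where "K = 2 * \<beta> * (1 - p) / (L + \<alpha>)"
  have K0: "K > 0" unfolding K_def using \<beta>0 p1 L0 \<alpha>0 by simp
  have tauK: "\<tau> powr (p - 2) = 1 / K"
  proof -
    have "\<tau> powr (p - 2) = K powr (1 / (2 - p) * (p - 2))" unfolding tau_def K_def[symmetric] by (simp add: powr_powr)
    also have "1 / (2 - p) * (p - 2) = -1" using p1 by (simp add: field_simps)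
    finally show ?thesis using K0 by (simp add: powr_minus divide_inverse)
  qed
  have "h s1 < h s2"
  proof (rule DERIV_pos_imp_increasing_open[OF lt])
    fix x assume x: "s1 < x" "x < s2"
    have x0: "x > 0" using x p1' by simp
    have "x powr (p - 2) < \<tau> powr (p - 2)"
      by (rule powr_less_mono2_neg) (use p1 tau_pos t1 x in auto)
    then have "\<beta> * p * (1 - p) * x powr (p - 2) < \<beta> * p * (1 - p) * (1 / K)"
      using \<beta>0 p0 p1 tauK by (intro mult_strict_left_mono) auto
    also have "\<beta> * p * (1 - p) * (1 / K) = p * (L + \<alpha>) / 2"
      unfolding K_def using \<beta>0 p1 L0 \<alpha>0 by (simp add: field_simps)
    also have "\<dots> \<le> \<alpha>"
    proof -
      have "p * L \<le> p * ((2 / p - 1) * \<alpha>)" using Lb p0 by (intro mult_left_mono) auto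
      also have "\<dots> = 2 * \<alpha> - p * \<alpha>" using p0 by (simp add: field_simps)
      finally show ?thesis by (simp add: field_simps)
    qed
    finally have "0 < \<alpha> + \<beta> * p * ((p - 1) * x powr (p - 1 - 1))"
      by (simp add: algebra_simps)
    then show "\<exists>y. (h has_real_derivative y) (at x) \<and> 0 < y" using hd[OF x0] by blast
  next
    show "continuous_on {s1..s2} h"
    proof (rule DERIV_atLeastAtMost_imp_continuous_on)
      fix x assume "s1 \<le> x" "x \<le> s2"
      then have "x > 0" using p1' by simp
      then show "\<exists>y. (h has_real_derivative y) (at x)" using hd by blast
    qed
  qed
  then show False using c1 c2 unfolding h_def by simp
qed

lemma uniq:
  assumes "s1 \<in> M c" "s2 \<in> M c" "0 < s1" "0 < s2"
  shows "s1 = s2"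
  using uniq_lt[of s1 c s2] uniq_lt[of s2 c s1] assms by (cases s1 s2 rule: linorder_cases) auto

lemma Ms_neg: "s \<in> M c \<Longrightarrow> -s \<in> M (-c)"
  unfolding Ms_iff
proof (intro conjI allI impI)
  assume H: "ereal \<bar>s\<bar> \<le> b \<and> (\<forall>t. ereal \<bar>t\<bar> \<le> b \<longrightarrow>
      0 \<le> \<beta> * (\<bar>t\<bar> powr p - \<bar>s\<bar> powr p) + (\<alpha> * s - c) * (t - s) + (L + \<alpha>) / 2 * (t - s)\<^sup>2)"
  then show "ereal \<bar>- s\<bar> \<le> b" by simp
  fix t assume "ereal \<bar>t\<bar> \<le> b"
  then have "ereal \<bar>-t\<bar> \<le> b" by simp
  then have "0 \<le> \<beta> * (\<bar>-t\<bar> powr p - \<bar>s\<bar> powr p) + (\<alpha> * s - c) * (-t - s) + (L + \<alpha>) / 2 * (-t - s)\<^sup>2"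
    using H by blast
  then show "0 \<le> \<beta> * (\<bar>t\<bar> powr p - \<bar>- s\<bar> powr p) + (\<alpha> * - s - - c) * (t - - s) + (L + \<alpha>) / 2 * (t - - s)\<^sup>2"
    by (simp add: algebra_simps power2_eq_square)
qed

lemma Ms_closed:
  assumes S: "S \<longlonglongrightarrow> s" and C: "C \<longlonglongrightarrow> c" and SM: "\<And>n. S n \<in> M (C n)" and s0: "s \<noteq> 0"
  shows "s \<in> M c"
  unfolding Ms_iff
proof (intro conjI allI impI)
  show "ereal \<bar>s\<bar> \<le> b"
  proof (cases b)
    case (real r)
    have "\<bar>S n\<bar> \<le> r" for n using SM[of n] real unfolding Ms_iff by simp
    then have "\<bar>s\<bar> \<le> r" by (intro LIMSEQ_le_const2[OF tendsto_rabs[OF S]]) auto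
    then show ?thesis using real by simp
  qed (use b0 in auto)
  fix t assume t: "ereal \<bar>t\<bar> \<le> b"
  have "(\<lambda>n. \<beta> * (\<bar>t\<bar> powr p - \<bar>S n\<bar> powr p) + (\<alpha> * S n - C n) * (t - S n) + (L + \<alpha>) / 2 * (t - S n)\<^sup>2)
     \<longlonglongrightarrow> \<beta> * (\<bar>t\<bar> powr p - \<bar>s\<bar> powr p) + (\<alpha> * s - c) * (t - s) + (L + \<alpha>) / 2 * (t - s)\<^sup>2"
    using s0 by (intro tendsto_intros S C) auto
  moreover have "\<And>n. 0 \<le> \<beta> * (\<bar>t\<bar> powr p - \<bar>S n\<bar> powr p) + (\<alpha> * S n - C n) * (t - S n) + (L + \<alpha>) / 2 * (t - S n)\<^sup>2"
    using SM t unfolding Ms_iff by blast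
  ultimately show "0 \<le> \<beta> * (\<bar>t\<bar> powr p - \<bar>s\<bar> powr p) + (\<alpha> * s - c) * (t - s) + (L + \<alpha>) / 2 * (t - s)\<^sup>2"
    by (intro LIMSEQ_le_const) auto
qed

lemma conv_pos:
  assumes C: "C \<longlonglongrightarrow> c" and SM: "\<And>n. S n \<in> M (C n)" and Sp: "\<And>n. S n > 0"
  shows "\<exists>l. S \<longlonglongrightarrow> l"
proof -
  obtain K where K: "\<And>n. norm (C n) \<le> K"
    using convergent_imp_Bseq[OF convergentI[OF C]] unfolding Bseq_def by blast
  have Sb: "\<bar>S n\<bar> \<le> K / \<alpha>" for n
  proof -
    have "\<alpha> * S n < C n" by (rule pos_lt_c[OF SM Sp])
    then have "\<alpha> * S n \<le> K" using K[of n] by simp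
    then show ?thesis using Sp[of n] \<alpha>0 by (simp add: field_simps)
  qed
  have bnd: "bounded (range (S \<circ> r))" for r
    unfolding bounded_real by (rule exI[of _ "K / \<alpha>"]) (simp add: Sb)
  have lim: "l \<in> M c \<and> l > 0" if r: "strict_mono r" and l: "(S \<circ> r) \<longlonglongrightarrow> l" for r l
  proof -
    have "m \<le> S n" for n by (rule pos_ge_m[OF SM Sp])
    then have ml: "m \<le> l" using l by (intro LIMSEQ_le_const) auto
    then have "l > 0" using m_pos by simp
    moreover have "l \<in> M c"
      by (rule Ms_closed[OF l LIMSEQ_subseq_LIMSEQ[OF C r]]) (use SM \<open>l > 0\<close> in auto)
    ultimately show ?thesis by simp
  qed
  obtain l r where r: "strict_mono r" and l: "(S \<circ> r) \<longlonglongrightarrow> l"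
    using bounded_imp_convergent_subsequence[OF bnd[of id]] by auto
  have lM: "l \<in> M c" "l > 0" using lim[OF r l] by auto
  have "S \<longlonglongrightarrow> l"
  proof (rule ccontr)
    assume "\<not> S \<longlonglongrightarrow> l"
    then have "\<exists>e>0. \<forall>N. \<exists>n\<ge>N. \<not> dist (S n) l < e"
      unfolding LIMSEQ_def by blast
    then obtain e where e: "e > 0" and fr: "\<And>N. \<exists>n\<ge>N. \<not> dist (S n) l < e"
      by blast
    have "infinite {n. e \<le> \<bar>S n - l\<bar>}"
      unfolding infinite_nat_iff_unbounded_le
    proof
      fix N
      obtain n where "n \<ge> N" "\<not> dist (S n) l < e" using fr by blast
      then show "\<exists>n\<ge>N. n \<in> {n. e \<le> \<bar>S n - l\<bar>}" by (auto simp: dist_real_def)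
    qed
    then obtain r2 :: "nat \<Rightarrow> nat" where r2: "strict_mono r2" and r2e: "\<And>n. e \<le> \<bar>S (r2 n) - l\<bar>"
      using infinite_enumerate by blast
    obtain l' and r3 :: "nat \<Rightarrow> nat" where r3: "strict_mono r3" and l': "((S \<circ> r2) \<circ> r3) \<longlonglongrightarrow> l'"
      using bounded_imp_convergent_subsequence[OF bnd[of r2]] by auto
    have "(S \<circ> (r2 \<circ> r3)) \<longlonglongrightarrow> l'" using l' unfolding comp_assoc .
    then have "l' \<in> M c \<and> l' > 0" using lim[OF strict_mono_o[OF r2 r3]] by blast
    then have "l' = l" using uniq[of l' c l] lM by blast
    moreover have "e \<le> \<bar>l' - l\<bar>"
    proof (rule LIMSEQ_le_const[OF tendsto_rabs[OF tendsto_diff[OF l' tendsto_const]]])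
      show "\<exists>N. \<forall>n\<ge>N. e \<le> \<bar>((S \<circ> r2) \<circ> r3) n - l\<bar>" using r2e by simp
    qed
    ultimately show False using e by simp
  qed
  then show ?thesis by blast
qed

lemma conv_gen:
  assumes C: "C \<longlonglongrightarrow> c" and SM: "\<And>n. n \<ge> N \<Longrightarrow> S n \<in> M (C n)"
    and sg: "\<And>n. n \<ge> N \<Longrightarrow> sgn (S n) = sgn (S N)"
  shows "\<exists>l. S \<longlonglongrightarrow> l"
proof -
  define S' where "S' = (\<lambda>n. S (n + N))"
  define C' where "C' = (\<lambda>n. C (n + N))"
  have C': "C' \<longlonglongrightarrow> c" unfolding C'_def by (rule LIMSEQ_ignore_initial_segment[OF C])
  have SM': "S' n \<in> M (C' n)" for n unfolding S'_def C'_def by (rule SM) simp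
  have sg': "sgn (S' n) = sgn (S N)" for n unfolding S'_def by (rule sg) simp
  have "\<exists>l. S' \<longlonglongrightarrow> l"
  proof (cases "S N" "0::real" rule: linorder_cases)
    case equal
    then have "S' n = 0" for n using sg'[of n] by (simp add: sgn_0_0)
    then have "S' = (\<lambda>n. 0)" by auto
    then show ?thesis by auto
  next
    case greater
    then have "S' n > 0" for n using sg'[of n] by (simp add: sgn_1_pos)
    then show ?thesis using conv_pos[OF C' SM'] by blast
  next
    case less
    then have pos: "- S' n > 0" for n using sg'[of n] by (simp add: sgn_1_neg)
    have "\<exists>l. (\<lambda>n. - S' n) \<longlonglongrightarrow> l"
      by (rule conv_pos[OF tendsto_minus[OF C'] Ms_neg[OF SM'] pos])
    then obtain l where "(\<lambda>n. - S' n) \<longlonglongrightarrow> l" by blast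
    then have "(\<lambda>n. - (- S' n)) \<longlonglongrightarrow> - l" by (rule tendsto_minus)
    then show ?thesis by auto
  qed
  then show ?thesis unfolding S'_def using LIMSEQ_offset by blast
qed

end

lemma sgn_step:
  fixes a b m :: real
  assumes "m > 0" "a = 0 \<or> m \<le> \<bar>a\<bar>" "b = 0 \<or> m \<le> \<bar>b\<bar>" "\<bar>b - a\<bar> < m"
  shows "sgn b = sgn a"
proof -
  have z1: "b = 0" if "a = 0"
  proof (rule ccontr)
    assume "b \<noteq> 0" then have "m \<le> \<bar>b\<bar>" using assms(3) by blast
    then show False using assms(4) that by simp
  qed
  have z2: "a = 0" if "b = 0"
  proof (rule ccontr)
    assume "a \<noteq> 0" then have "m \<le> \<bar>a\<bar>" using assms(2) by blast
    then show False using assms(4) that by simp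
  qed
  have p1: "b > 0" if "a > 0"
  proof (rule ccontr)
    assume "\<not> b > 0"
    moreover have "b \<noteq> 0" using z2 that by auto
    ultimately have "b < 0" by simp
    moreover have "m \<le> a" using assms(2) that by auto
    ultimately have "m \<le> \<bar>b - a\<bar>" by simp
    then show False using assms(4) by simp
  qed
  have p2: "b < 0" if "a < 0"
  proof (rule ccontr)
    assume "\<not> b < 0"
    moreover have "b \<noteq> 0" using z2 that by auto
    ultimately have "b > 0" by simp
    moreover have "m \<le> -a" using assms(2) that by auto
    ultimately have "m \<le> \<bar>b - a\<bar>" by simp
    then show False using assms(4) by simp
  qed
  show ?thesis
  proof (cases a "0::real" rule: linorder_cases)
    case less then show ?thesis using p2 by (simp add: sgn_real_def)
  next
    case equal then show ?thesis using z1 by simp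
  next
    case greater then show ?thesis using p1 by (simp add: sgn_real_def)
  qed
qed

lemma sign_stable:
  fixes v :: "nat \<Rightarrow> real"
  assumes m: "m > 0" and vm: "\<And>k. k \<ge> 1 \<Longrightarrow> v k = 0 \<or> m \<le> \<bar>v k\<bar>"
    and d: "(\<lambda>k. v (Suc k) - v k) \<longlonglongrightarrow> 0"
  shows "\<exists>N. \<forall>n\<ge>N. sgn (v n) = sgn (v N)"
proof -
  obtain N0 where N0: "\<And>k. k \<ge> N0 \<Longrightarrow> \<bar>v (Suc k) - v k\<bar> < m"
    using LIMSEQ_D[OF d m] by auto
  define N where "N = Suc N0"
  have "sgn (v n) = sgn (v N)" if "n \<ge> N" for n
    using that
  proof (induction n rule: dec_induct)
    case base then show ?case by simp
  next
    case (step n)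
    have "sgn (v (Suc n)) = sgn (v n)"
      by (rule sgn_step[OF m vm vm N0]) (use step N_def in auto)
    then show ?case using step by simp
  qed
  then show ?thesis by blast
qed


lemma powr_le_sq: "0 \<le> p \<Longrightarrow> p \<le> 1 \<Longrightarrow> \<bar>y::real\<bar> powr p \<le> 1 + y\<^sup>2"
proof (cases "\<bar>y\<bar> \<le> 1")
  case True
  assume "0 \<le> p" "p \<le> 1"
  then have "\<bar>y\<bar> powr p \<le> 1 powr p" using True by (intro powr_mono2) auto
  then have "\<bar>y\<bar> powr p \<le> 1" by simp
  moreover have "0 \<le> y\<^sup>2" by simp
  ultimately show ?thesis by linarith
next
  case False
  assume "0 \<le> p" "p \<le> 1"
  then have "\<bar>y\<bar> powr p \<le> \<bar>y\<bar> powr 1" using False by (intro powr_mono) auto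
  also have "\<dots> = \<bar>y\<bar>" using False by simp
  also have "\<dots> \<le> y\<^sup>2"
  proof -
    have "\<bar>y\<bar> * 1 \<le> \<bar>y\<bar> * \<bar>y\<bar>" using False by (intro mult_left_mono) auto
    then show ?thesis by (simp add: power2_eq_square)
  qed
  finally show ?thesis by simp
qed

locale setting =
  fixes \<Omega> :: "'a::euclidean_space set"
    and f :: "('a \<Rightarrow> real) \<Rightarrow> real" and g :: "('a \<Rightarrow> real) \<Rightarrow> 'a \<Rightarrow> real"
    and Lf L \<alpha> \<beta> p :: real and b :: ereal
    and u :: "nat \<Rightarrow> 'a \<Rightarrow> real"
  assumes fin: "finite_measure (lebesgue_on \<Omega>)"
    and A: "assumption_A \<Omega> f g Lf"
    and cc: "completely_continuous \<Omega> g"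
    and \<alpha>0: "\<alpha> > 0" and \<beta>0: "\<beta> > 0" and p0: "0 < p" and p1: "p < 1" and b0: "b > 0"
    and LfL: "Lf < L" and Lb: "L \<le> (2 / p - 1) * \<alpha>" and L0: "L > 0"
    and u0: "u 0 \<in> L2 \<Omega>"
    and mini: "\<And>k. u (Suc k) \<in> admissible \<Omega> b \<and>
              (\<forall>v\<in>admissible \<Omega> b. subproblem_obj \<Omega> f g L \<alpha> \<beta> p (u k) (u (Suc k))
                                    \<le> subproblem_obj \<Omega> f g L \<alpha> \<beta> p (u k) v)"
begin

abbreviation "LM \<equiv> lebesgue_on \<Omega>"

sublocale sc L \<alpha> \<beta> p b
  by unfold_locales (use \<alpha>0 \<beta>0 p0 p1 b0 Lb L0 in auto)

lemma uL2: "u k \<in> L2 \<Omega>"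
  by (cases k) (use u0 mini in \<open>auto simp: admissible_def\<close>)

lemma gL2: "w \<in> L2 \<Omega> \<Longrightarrow> g w \<in> L2 \<Omega>"
  using A unfolding assumption_A_def by blast

lemma f_lb: "\<exists>c. \<forall>w\<in>L2 \<Omega>. c \<le> f w"
  using A unfolding assumption_A_def by blast

lemma J_int: "w \<in> L2 \<Omega> \<Longrightarrow> integrable LM (\<lambda>x. \<bar>w x\<bar> powr p)"
proof -
  assume w: "w \<in> L2 \<Omega>"
  have [measurable]: "w \<in> borel_measurable LM" using w by (simp add: L2_def)
  show ?thesis
  proof (rule Bochner_Integration.integrable_bound[where f="\<lambda>x. 1 + (w x)\<^sup>2"])
    show "integrable LM (\<lambda>x. 1 + (w x)\<^sup>2)"
      using L2_sq[OF fin w] finite_measure.integrable_const[OF fin, of 1] by (intro Bochner_Integration.integrable_add)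
    show "(\<lambda>x. \<bar>w x\<bar> powr p) \<in> borel_measurable LM" by measurable
    show "AE x in LM. norm (\<bar>w x\<bar> powr p) \<le> norm (1 + (w x)\<^sup>2)"
      using powr_le_sq p0 p1 by (intro AE_I2) simp
  qed
qed

definition J :: "('a \<Rightarrow> real) \<Rightarrow> real" where
  "J w = (LINT x|LM. \<bar>w x\<bar> powr p)"

definition F :: "('a \<Rightarrow> real) \<Rightarrow> real" where
  "F w = f w + \<alpha> / 2 * NN \<Omega> w + \<beta> * J w"

abbreviation "obj \<equiv> subproblem_obj \<Omega> f g L \<alpha> \<beta> p"

definition d :: "nat \<Rightarrow> 'a \<Rightarrow> real" where
  "d k = (\<lambda>x. u (Suc k) x - u k x)"

lemma dL2: "d k \<in> L2 \<Omega>"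
  unfolding d_def by (rule L2_diff[OF fin uL2 uL2])

lemma J_nonneg: "J w \<ge> 0" unfolding J_def by simp

lemma obj_alt: "obj w v = f w + l2_inner \<Omega> (g w) (\<lambda>x. v x - w x) + L / 2 * NN \<Omega> (\<lambda>x. v x - w x)
     + \<alpha> / 2 * NN \<Omega> v + \<beta> * J v"
  unfolding subproblem_obj_def J_def by (simp add: l2_norm_sq[OF fin])

lemma obj_self: "obj w w = F w"
  unfolding obj_alt F_def by (simp add: l2_inner_def)

lemma adm_u: "k \<ge> 1 \<Longrightarrow> u k \<in> admissible \<Omega> b"
  using mini[of "k - 1"] by simp

lemma decrease:
  assumes k: "k \<ge> 1"
  shows "F (u (Suc k)) + (L - Lf) / 2 * NN \<Omega> (d k) \<le> F (u k)"
proof -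
  have "obj (u k) (u (Suc k)) \<le> obj (u k) (u k)" using mini[of k] adm_u[OF k] by blast
  then have o1: "f (u k) + l2_inner \<Omega> (g (u k)) (d k) + L / 2 * NN \<Omega> (d k)
     + \<alpha> / 2 * NN \<Omega> (u (Suc k)) + \<beta> * J (u (Suc k)) \<le> F (u k)"
    unfolding obj_self obj_alt d_def .
  have "f (u (Suc k)) \<le> f (u k) + l2_inner \<Omega> (g (u k)) (d k) + Lf / 2 * NN \<Omega> (d k)"
    unfolding d_def by (rule descent[OF fin A uL2 uL2])
  moreover have "(L - Lf) / 2 * NN \<Omega> (d k) = L / 2 * NN \<Omega> (d k) - Lf / 2 * NN \<Omega> (d k)"
    by (simp add: left_diff_distrib diff_divide_distrib)
  ultimately show ?thesis using o1 unfolding F_def by linarith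
qed

lemma F_lb: "\<exists>c. \<forall>k. c \<le> F (u k)"
proof -
  obtain c where c: "\<And>w. w \<in> L2 \<Omega> \<Longrightarrow> c \<le> f w" using f_lb by blast
  have "c \<le> F (u k)" for k
  proof -
    have "0 \<le> \<alpha> / 2 * NN \<Omega> (u k)" using \<alpha>0 by simp
    moreover have "0 \<le> \<beta> * J (u k)" using \<beta>0 J_nonneg by simp
    ultimately show ?thesis using c[OF uL2[of k]] unfolding F_def by linarith
  qed
  then show ?thesis by blast
qed

lemma telescope: "F (u (Suc n)) + (L - Lf) / 2 * (\<Sum>i<n. NN \<Omega> (d (Suc i))) \<le> F (u 1)"
proof (induction n)
  case 0 then show ?case by simp
next
  case (Suc n)
  have "F (u (Suc (Suc n))) + (L - Lf) / 2 * NN \<Omega> (d (Suc n)) \<le> F (u (Suc n))"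
    by (rule decrease) simp
  then show ?case using Suc by (simp add: algebra_simps)
qed

lemma summable_d: "summable (\<lambda>k. NN \<Omega> (d k))"
proof -
  obtain c where c: "\<And>k. c \<le> F (u k)" using F_lb by blast
  have "(\<Sum>i<n. NN \<Omega> (d (Suc i))) \<le> (F (u 1) - c) / ((L - Lf) / 2)" for n
  proof -
    have "(L - Lf) / 2 * (\<Sum>i<n. NN \<Omega> (d (Suc i))) \<le> F (u 1) - c"
      using telescope[of n] c[of "Suc n"] by simp
    then show ?thesis using LfL by (simp add: field_simps)
  qed
  then have "summable (\<lambda>k. NN \<Omega> (d (Suc k)))"
    by (intro summableI_nonneg_bounded) auto
  then show ?thesis using summable_Suc_iff by blast
qed

lemma u_bound: "\<exists>B. \<forall>k\<ge>1. NN \<Omega> (u k) \<le> B"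
proof -
  obtain c0 where c0: "\<And>w. w \<in> L2 \<Omega> \<Longrightarrow> c0 \<le> f w" using f_lb by blast
  have "NN \<Omega> (u k) \<le> (F (u 1) - c0) / (\<alpha> / 2)" if k: "k \<ge> 1" for k
  proof -
    have "F (u k) \<le> F (u 1)" using k
    proof (induction k rule: dec_induct)
      case base then show ?case by simp
    next
      case (step n)
      have "F (u (Suc n)) + (L - Lf) / 2 * NN \<Omega> (d n) \<le> F (u n)" by (rule decrease) (use step in simp)
      moreover have "(L - Lf) / 2 * NN \<Omega> (d n) \<ge> 0" using LfL by simp
      ultimately show ?case using step by linarith
    qed
    moreover have "0 \<le> \<beta> * J (u k)" using \<beta>0 J_nonneg by simp
    ultimately have "\<alpha> / 2 * NN \<Omega> (u k) \<le> F (u 1) - c0"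
      using c0[OF uL2[of k]] unfolding F_def by linarith
    then show ?thesis using \<alpha>0 by (simp add: field_simps)
  qed
  then show ?thesis by blast
qed

end


definition Qe :: "real \<Rightarrow> real \<Rightarrow> real \<Rightarrow> real \<Rightarrow> real \<Rightarrow> real \<Rightarrow> real \<Rightarrow> real" where
  "Qe L \<alpha> \<beta> p s c t = \<beta> * (\<bar>t\<bar> powr p - \<bar>s\<bar> powr p) + (\<alpha> * s - c) * (t - s) + (L + \<alpha>) / 2 * (t - s)\<^sup>2"

context sc
begin

lemma Ms_of_rat:
  assumes sb: "ereal \<bar>s\<bar> \<le> b" and H: "\<And>r. r \<in> \<rat> \<Longrightarrow> ereal \<bar>r\<bar> \<le> b \<Longrightarrow> 0 \<le> Qe L \<alpha> \<beta> p s c r"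
  shows "s \<in> M c"
  unfolding Ms_iff
proof (intro conjI allI impI sb)
  fix t assume tb: "ereal \<bar>t\<bar> \<le> b"
  show "0 \<le> \<beta> * (\<bar>t\<bar> powr p - \<bar>s\<bar> powr p) + (\<alpha> * s - c) * (t - s) + (L + \<alpha>) / 2 * (t - s)\<^sup>2"
  proof (cases "t = 0")
    case True
    then show ?thesis using H[of 0] tb unfolding Qe_def by simp
  next
    case False
    have "\<forall>n. \<exists>q\<in>\<rat>. max 0 (\<bar>t\<bar> - 1 / (Suc n)) < q \<and> q < \<bar>t\<bar>"
      using False by (intro allI Rats_dense_in_real) simp
    then obtain R where R: "\<And>n. R n \<in> \<rat>" "\<And>n. max 0 (\<bar>t\<bar> - 1 / (Suc n)) < R n" "\<And>n. R n < \<bar>t\<bar>"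
      by metis
    have Rlim: "R \<longlonglongrightarrow> \<bar>t\<bar>"
    proof (rule tendsto_sandwich[of "\<lambda>n. \<bar>t\<bar> - 1 / (Suc n)" _ _ "\<lambda>n. \<bar>t\<bar>"])
      have "\<bar>t\<bar> - 1 / (Suc n) \<le> R n" for n using R(2)[of n] by linarith
      then show "\<forall>\<^sub>F n in sequentially. \<bar>t\<bar> - 1 / (Suc n) \<le> R n" by (intro always_eventually) blast
      have "R n \<le> \<bar>t\<bar>" for n using R(3)[of n] by linarith
      then show "\<forall>\<^sub>F n in sequentially. R n \<le> \<bar>t\<bar>" by (intro always_eventually) blast
      have "(\<lambda>n. 1 / real (Suc n)) \<longlonglongrightarrow> 0" by (rule LIMSEQ_Suc[OF lim_const_over_n])
      then show "(\<lambda>n. \<bar>t\<bar> - 1 / real (Suc n)) \<longlonglongrightarrow> \<bar>t\<bar>"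
        using tendsto_diff[OF tendsto_const[of "\<bar>t\<bar>"]] by fastforce
    qed simp
    define T where "T = (\<lambda>n. if t > 0 then R n else - R n)"
    have TQ: "T n \<in> \<rat>" for n using R(1) unfolding T_def by auto
    have Rpos: "R n > 0" for n using R(2)[of n] by simp
    have Tabs: "\<bar>T n\<bar> = R n" for n using Rpos[of n] unfolding T_def by auto
    have Tb: "ereal \<bar>T n\<bar> \<le> b" for n
    proof -
      have "ereal \<bar>T n\<bar> \<le> ereal \<bar>t\<bar>" using Tabs R(3)[of n] by simp
      then show ?thesis using tb by (rule order_trans)
    qed
    have Tlim: "T \<longlonglongrightarrow> t"
    proof (cases "t > 0")
      case True then show ?thesis using Rlim unfolding T_def by simp
    next
      case False
      then have "t < 0" using \<open>t \<noteq> 0\<close> by simp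
      then show ?thesis using tendsto_minus[OF Rlim] unfolding T_def by simp
    qed
    have "(\<lambda>n. Qe L \<alpha> \<beta> p s c (T n)) \<longlonglongrightarrow> Qe L \<alpha> \<beta> p s c t"
      unfolding Qe_def using False by (intro tendsto_intros Tlim) auto
    moreover have "\<And>n. 0 \<le> Qe L \<alpha> \<beta> p s c (T n)" using H TQ Tb by blast
    ultimately have "0 \<le> Qe L \<alpha> \<beta> p s c t" by (intro LIMSEQ_le_const) auto
    then show ?thesis unfolding Qe_def .
  qed
qed

end

context setting
begin

definition Phi :: "('a \<Rightarrow> real) \<Rightarrow> real \<Rightarrow> 'a \<Rightarrow> real" where
  "Phi w t x = g w x * (t - w x) + L / 2 * (t - w x)\<^sup>2 + \<alpha> / 2 * t\<^sup>2 + \<beta> * \<bar>t\<bar> powr p"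

lemma Phi_diff: "Phi w t x - Phi w s x = Qe L \<alpha> \<beta> p s (L * (w x - s) - g w x) t"
  unfolding Phi_def Qe_def by (simp add: field_simps power2_eq_square)

lemma Phi_int:
  assumes w: "w \<in> L2 \<Omega>" and v: "v \<in> L2 \<Omega>"
  shows "integrable LM (\<lambda>x. Phi w (v x) x)"
    and "obj w v = f w + (LINT x|LM. Phi w (v x) x)"
proof -
  have i1: "integrable LM (\<lambda>x. g w x * (v x - w x))" by (rule L2_prod[OF fin gL2[OF w] L2_diff[OF fin v w]])
  have i2: "integrable LM (\<lambda>x. L / 2 * (v x - w x)\<^sup>2)" using L2_sq[OF fin L2_diff[OF fin v w]] by simp
  have i3: "integrable LM (\<lambda>x. \<alpha> / 2 * (v x)\<^sup>2)" using L2_sq[OF fin v] by simp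
  have i4: "integrable LM (\<lambda>x. \<beta> * \<bar>v x\<bar> powr p)" using J_int[OF v] by simp
  show "integrable LM (\<lambda>x. Phi w (v x) x)"
    unfolding Phi_def using i1 i2 i3 i4 by (intro Bochner_Integration.integrable_add)
  have "(LINT x|LM. Phi w (v x) x) = (LINT x|LM. g w x * (v x - w x)) + (LINT x|LM. L / 2 * (v x - w x)\<^sup>2)
      + (LINT x|LM. \<alpha> / 2 * (v x)\<^sup>2) + (LINT x|LM. \<beta> * \<bar>v x\<bar> powr p)"
    unfolding Phi_def using i1 i2 i3 i4 by (simp add: Bochner_Integration.integrable_add)
  then show "obj w v = f w + (LINT x|LM. Phi w (v x) x)"
    unfolding obj_alt J_def l2_inner_def by simp
qed

lemma pointwise_one:
  assumes rb: "ereal \<bar>r\<bar> \<le> b"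
  shows "AE x in LM. Phi (u k) (u (Suc k) x) x \<le> Phi (u k) r x"
proof -
  define w where "w = u k"
  define s where "s = u (Suc k)"
  have wL: "w \<in> L2 \<Omega>" and sL: "s \<in> L2 \<Omega>" unfolding w_def s_def by (rule uL2)+
  have [measurable]: "w \<in> borel_measurable LM" "s \<in> borel_measurable LM" "g w \<in> borel_measurable LM"
    using wL sL gL2[OF wL] by (auto simp: L2_def)
  define A where "A = {x \<in> space LM. Phi w r x < Phi w (s x) x}"
  have [measurable]: "A \<in> sets LM" unfolding A_def Phi_def by measurable
  define v where "v = (\<lambda>x. if x \<in> A then r else s x)"
  have [measurable]: "v \<in> borel_measurable LM" unfolding v_def by measurable
  have vL: "v \<in> L2 \<Omega>"
    unfolding L2_def
  proof (intro CollectI conjI)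
    show "v \<in> borel_measurable LM" by measurable
    show "integrable LM (\<lambda>x. (v x)\<^sup>2)"
    proof (rule Bochner_Integration.integrable_bound[where f="\<lambda>x. r\<^sup>2 + (s x)\<^sup>2"])
      show "integrable LM (\<lambda>x. r\<^sup>2 + (s x)\<^sup>2)"
        using L2_sq[OF fin sL] finite_measure.integrable_const[OF fin, of "r\<^sup>2"]
        by (intro Bochner_Integration.integrable_add)
      show "(\<lambda>x. (v x)\<^sup>2) \<in> borel_measurable LM" by measurable
      show "AE x in LM. norm ((v x)\<^sup>2) \<le> norm (r\<^sup>2 + (s x)\<^sup>2)"
        by (intro AE_I2) (auto simp: v_def)
    qed
  qed
  have sadm: "s \<in> admissible \<Omega> b" unfolding s_def using mini[of k] by blast
  have vadm: "v \<in> admissible \<Omega> b"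
    unfolding admissible_def
  proof (intro CollectI conjI vL)
    have "AE x in LM. ereal \<bar>s x\<bar> \<le> b" using sadm unfolding admissible_def by blast
    then show "AE x in LM. ereal \<bar>v x\<bar> \<le> b"
      by (rule eventually_mono) (use rb in \<open>auto simp: v_def\<close>)
  qed
  have "obj w s \<le> obj w v" using mini[of k] vadm unfolding w_def s_def by blast
  then have le: "(LINT x|LM. Phi w (s x) x) \<le> (LINT x|LM. Phi w (v x) x)"
    unfolding Phi_int(2)[OF wL sL] Phi_int(2)[OF wL vL] by simp
  define h where "h = (\<lambda>x. Phi w (s x) x - Phi w (v x) x)"
  have hint: "integrable LM h" unfolding h_def using Phi_int(1)[OF wL sL] Phi_int(1)[OF wL vL] by simp
  have hnn: "AE x in LM. 0 \<le> h x"
    by (intro AE_I2) (auto simp: h_def v_def A_def)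
  have "(LINT x|LM. h x) \<le> 0" unfolding h_def using le Phi_int(1)[OF wL sL] Phi_int(1)[OF wL vL] by simp
  moreover have "(LINT x|LM. h x) \<ge> 0" using hnn by (rule integral_nonneg_AE)
  ultimately have "(LINT x|LM. h x) = 0" by simp
  then have "AE x in LM. h x = 0" using integral_nonneg_eq_0_iff_AE[OF hint hnn] by simp
  moreover have "AE x in LM. x \<in> \<Omega>" by (rule AE_I2) simp
  ultimately show ?thesis
  proof eventually_elim
    case (elim x)
    show ?case
    proof (rule ccontr)
      assume "\<not> ?case"
      then have "x \<in> A" using elim(2) unfolding A_def w_def s_def by auto
      then have "h x = Phi w (s x) x - Phi w r x" unfolding h_def v_def by simp
      moreover have "Phi w r x < Phi w (s x) x" using \<open>x \<in> A\<close> unfolding A_def by simp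
      ultimately show False using elim(1) by simp
    qed
  qed
qed

definition ck :: "nat \<Rightarrow> 'a \<Rightarrow> real" where
  "ck k x = L * (u k x - u (Suc k) x) - g (u k) x"

lemma pointwise_Ms: "AE x in LM. u (Suc k) x \<in> Ms L \<alpha> \<beta> p b (ck k x)"
proof -
  define X where "X = {r \<in> \<rat>. ereal \<bar>r\<bar> \<le> b}"
  have "countable X" unfolding X_def using countable_rat by (rule countable_subset[rotated]) auto
  then have "AE x in LM. \<forall>r\<in>X. Phi (u k) (u (Suc k) x) x \<le> Phi (u k) r x"
    using pointwise_one unfolding X_def by (subst AE_ball_countable) auto
  moreover have "AE x in LM. ereal \<bar>u (Suc k) x\<bar> \<le> b"
    using mini[of k] unfolding admissible_def by blast
  ultimately show ?thesis
  proof eventually_elim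
    case (elim x)
    show ?case
    proof (rule Ms_of_rat)
      show "ereal \<bar>u (Suc k) x\<bar> \<le> b" by (rule elim(2))
      fix r assume "r \<in> \<rat>" "ereal \<bar>r\<bar> \<le> b"
      then have "Phi (u k) (u (Suc k) x) x \<le> Phi (u k) r x" using elim(1) unfolding X_def by blast
      then have "0 \<le> Phi (u k) r x - Phi (u k) (u (Suc k) x) x" by simp
      then show "0 \<le> Qe L \<alpha> \<beta> p (u (Suc k) x) (ck k x) r" unfolding Phi_diff ck_def .
    qed
  qed
qed

end


lemma AE_tendsto_of_summable:
  fixes h :: "nat \<Rightarrow> 'x \<Rightarrow> real"
  assumes meas[measurable]: "\<And>k. h k \<in> borel_measurable M"
    and int: "\<And>k. integrable M (\<lambda>x. (h k x)\<^sup>2)"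
    and summ: "summable (\<lambda>k. (\<integral>x. (h k x)\<^sup>2 \<partial>M))"
  shows "AE x in M. (\<lambda>k. h k x) \<longlonglongrightarrow> 0"
proof -
  have "(\<integral>\<^sup>+x. (\<Sum>k. ennreal ((h k x)\<^sup>2)) \<partial>M) = (\<Sum>k. \<integral>\<^sup>+x. ennreal ((h k x)\<^sup>2) \<partial>M)"
    by (rule nn_integral_suminf) measurable
  also have "\<dots> = (\<Sum>k. ennreal (\<integral>x. (h k x)\<^sup>2 \<partial>M))"
    by (intro suminf_cong nn_integral_eq_integral int) auto
  also have "\<dots> = ennreal (\<Sum>k. \<integral>x. (h k x)\<^sup>2 \<partial>M)"
    by (rule suminf_ennreal2) (use summ in auto)
  finally have fin: "(\<integral>\<^sup>+x. (\<Sum>k. ennreal ((h k x)\<^sup>2)) \<partial>M) \<noteq> \<infinity>" by simp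
  have "AE x in M. (\<Sum>k. ennreal ((h k x)\<^sup>2)) \<noteq> \<infinity>"
    by (rule nn_integral_PInf_AE[OF _ fin]) measurable
  then show ?thesis
  proof (rule eventually_mono)
    fix x assume "(\<Sum>k. ennreal ((h k x)\<^sup>2)) \<noteq> \<infinity>"
    then have "summable (\<lambda>k. (h k x)\<^sup>2)" by (intro summable_suminf_not_top) auto
    then have "(\<lambda>k. (h k x)\<^sup>2) \<longlonglongrightarrow> 0" by (rule summable_LIMSEQ_zero)
    then have "(\<lambda>k. sqrt ((h k x)\<^sup>2)) \<longlonglongrightarrow> sqrt 0" by (rule tendsto_real_sqrt)
    then have "(\<lambda>k. \<bar>h k x\<bar>) \<longlonglongrightarrow> 0" by simp
    then show "(\<lambda>k. h k x) \<longlonglongrightarrow> 0" by (simp add: tendsto_rabs_zero_iff)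
  qed
qed

lemma abs_le_min_sq:
  fixes y K :: real
  assumes "K > 0"
  shows "\<bar>y\<bar> \<le> min \<bar>y\<bar> K + y\<^sup>2 / K"
proof (cases "\<bar>y\<bar> \<le> K")
  case True
  then show ?thesis using assms by simp
next
  case False
  then have "K * \<bar>y\<bar> \<le> \<bar>y\<bar> * \<bar>y\<bar>" by (intro mult_right_mono) auto
  then have "\<bar>y\<bar> \<le> y\<^sup>2 / K" using assms by (simp add: field_simps power2_eq_square)
  then show ?thesis using False assms by simp
qed

lemma L1_of_AE:
  fixes h :: "nat \<Rightarrow> 'x \<Rightarrow> real"
  assumes finM: "finite_measure M"
    and meas[measurable]: "\<And>n. h n \<in> borel_measurable M"
    and lim: "AE x in M. (\<lambda>n. h n x) \<longlonglongrightarrow> 0"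
    and int: "\<And>n. integrable M (\<lambda>x. (h n x)\<^sup>2)"
    and bnd: "\<And>n. (\<integral>x. (h n x)\<^sup>2 \<partial>M) \<le> C"
  shows "(\<lambda>n. \<integral>x. \<bar>h n x\<bar> \<partial>M) \<longlonglongrightarrow> 0"
proof (rule tendstoI)
  fix \<epsilon> :: real assume e: "\<epsilon> > 0"
  have "0 \<le> (\<integral>x. (h 0 x)\<^sup>2 \<partial>M)" by (rule integral_nonneg_AE) simp
  then have C0: "C \<ge> 0" using bnd[of 0] by linarith
  define K where "K = 2 * C / \<epsilon> + 1"
  have K0: "K > 0" unfolding K_def using C0 e by (simp add: add_nonneg_pos)
  have hint: "integrable M (h n)" for n
    using finite_measure.square_integrable_imp_integrable[OF finM meas int] .
  have mint: "integrable M (\<lambda>x. min \<bar>h n x\<bar> K)" for n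
  proof (rule Bochner_Integration.integrable_bound[where f="\<lambda>x. K"])
    show "integrable M (\<lambda>x. K)" using finite_measure.integrable_const[OF finM] .
    show "(\<lambda>x. min \<bar>h n x\<bar> K) \<in> borel_measurable M" by measurable
    show "AE x in M. norm (min \<bar>h n x\<bar> K) \<le> norm K" using K0 by (intro AE_I2) auto
  qed
  have dc: "(\<lambda>n. \<integral>x. min \<bar>h n x\<bar> K \<partial>M) \<longlonglongrightarrow> (\<integral>x. 0 \<partial>M)"
  proof (rule integral_dominated_convergence[where w="\<lambda>x. K"])
    show "(\<lambda>x. 0::real) \<in> borel_measurable M" by simp
    show "\<And>n. (\<lambda>x. min \<bar>h n x\<bar> K) \<in> borel_measurable M" by measurable
    show "integrable M (\<lambda>x. K)" using finite_measure.integrable_const[OF finM] .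
    show "AE x in M. (\<lambda>n. min \<bar>h n x\<bar> K) \<longlonglongrightarrow> 0"
      using lim
    proof (rule eventually_mono)
      fix x assume "(\<lambda>n. h n x) \<longlonglongrightarrow> 0"
      then have "(\<lambda>n. min \<bar>h n x\<bar> K) \<longlonglongrightarrow> min \<bar>0\<bar> K" by (intro tendsto_intros)
      then show "(\<lambda>n. min \<bar>h n x\<bar> K) \<longlonglongrightarrow> 0" using K0 by simp
    qed
    show "\<And>n. AE x in M. norm (min \<bar>h n x\<bar> K) \<le> K" using K0 by (intro AE_I2) auto
  qed
  then have dc': "(\<lambda>n. \<integral>x. min \<bar>h n x\<bar> K \<partial>M) \<longlonglongrightarrow> 0" by simp
  have "\<forall>\<^sub>F n in sequentially. (\<integral>x. min \<bar>h n x\<bar> K \<partial>M) < \<epsilon> / 2"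
    by (rule order_tendstoD(2)[OF dc']) (use e in simp)
  then show "\<forall>\<^sub>F n in sequentially. dist (\<integral>x. \<bar>h n x\<bar> \<partial>M) 0 < \<epsilon>"
  proof (rule eventually_mono)
    fix n assume small: "(\<integral>x. min \<bar>h n x\<bar> K \<partial>M) < \<epsilon> / 2"
    have "(\<integral>x. \<bar>h n x\<bar> \<partial>M) \<le> (\<integral>x. min \<bar>h n x\<bar> K + (h n x)\<^sup>2 / K \<partial>M)"
      using mint[of n] int[of n] hint[of n] abs_le_min_sq[OF K0]
      by (intro integral_mono) auto
    also have "\<dots> = (\<integral>x. min \<bar>h n x\<bar> K \<partial>M) + (\<integral>x. (h n x)\<^sup>2 \<partial>M) / K"
      using mint[of n] int[of n] by simp
    also have "(\<integral>x. (h n x)\<^sup>2 \<partial>M) / K \<le> C / K" using bnd[of n] K0 by (simp add: divide_right_mono)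
    also have "C / K < \<epsilon> / 2"
    proof -
      have "2 * C < \<epsilon> * K" unfolding K_def using e by (simp add: field_simps)
      then show ?thesis using K0 e by (simp add: field_simps)
    qed
    finally have "(\<integral>x. \<bar>h n x\<bar> \<partial>M) < \<epsilon>" using small by simp
    moreover have "0 \<le> (\<integral>x. \<bar>h n x\<bar> \<partial>M)" by simp
    ultimately show "dist (\<integral>x. \<bar>h n x\<bar> \<partial>M) 0 < \<epsilon>" by simp
  qed
qed

lemma L2_of_AE_lim:
  fixes un :: "nat \<Rightarrow> 'x \<Rightarrow> real"
  assumes meas[measurable]: "\<And>n. un n \<in> borel_measurable M" and Vm[measurable]: "V \<in> borel_measurable M"
    and lim: "AE x in M. (\<lambda>n. un n x) \<longlonglongrightarrow> V x"
    and int: "\<And>n. integrable M (\<lambda>x. (un n x)\<^sup>2)"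
    and bnd: "\<And>n. (\<integral>x. (un n x)\<^sup>2 \<partial>M) \<le> B"
  shows "integrable M (\<lambda>x. (V x)\<^sup>2)"
proof (rule integrableI_nonneg)
  show "(\<lambda>x. (V x)\<^sup>2) \<in> borel_measurable M" by measurable
  show "AE x in M. 0 \<le> (V x)\<^sup>2" by simp
  have "(\<integral>\<^sup>+x. ennreal ((V x)\<^sup>2) \<partial>M) = (\<integral>\<^sup>+x. liminf (\<lambda>n. ennreal ((un n x)\<^sup>2)) \<partial>M)"
  proof (rule nn_integral_cong_AE)
    show "AE x in M. ennreal ((V x)\<^sup>2) = liminf (\<lambda>n. ennreal ((un n x)\<^sup>2))"
      using lim
    proof (rule eventually_mono)
      fix x assume "(\<lambda>n. un n x) \<longlonglongrightarrow> V x"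
      then have "(\<lambda>n. (un n x)\<^sup>2) \<longlonglongrightarrow> (V x)\<^sup>2" by (intro tendsto_intros)
      then have "(\<lambda>n. ennreal ((un n x)\<^sup>2)) \<longlonglongrightarrow> ennreal ((V x)\<^sup>2)" by (rule tendsto_ennrealI)
      then show "ennreal ((V x)\<^sup>2) = liminf (\<lambda>n. ennreal ((un n x)\<^sup>2))"
        by (intro lim_imp_Liminf[symmetric]) simp_all
    qed
  qed
  also have "\<dots> \<le> liminf (\<lambda>n. \<integral>\<^sup>+x. ennreal ((un n x)\<^sup>2) \<partial>M)"
    by (rule nn_integral_liminf) measurable
  also have "\<dots> \<le> liminf (\<lambda>n. ennreal B)"
  proof (rule Liminf_mono, intro always_eventually allI)
    fix n
    have "(\<integral>\<^sup>+x. ennreal ((un n x)\<^sup>2) \<partial>M) = ennreal (\<integral>x. (un n x)\<^sup>2 \<partial>M)"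
      by (rule nn_integral_eq_integral[OF int]) auto
    also have "\<dots> \<le> ennreal B" using bnd[of n] by (rule ennreal_leI)
    finally show "(\<integral>\<^sup>+x. ennreal ((un n x)\<^sup>2) \<partial>M) \<le> ennreal B" .
  qed
  also have "\<dots> = ennreal B" by (simp add: Liminf_const)
  also have "\<dots> < \<infinity>" by simp
  finally show "(\<integral>\<^sup>+x. ennreal ((V x)\<^sup>2) \<partial>M) < \<infinity>" .
qed


lemma weak_sub: "weak_conv_L2 \<Omega> us w \<Longrightarrow> strict_mono \<rho> \<Longrightarrow> weak_conv_L2 \<Omega> (us \<circ> \<rho>) w"
  unfolding weak_conv_L2_def
proof (intro conjI ballI allI)
  assume H: "(\<forall>n. us n \<in> L2 \<Omega>) \<and> w \<in> L2 \<Omega> \<and> (\<forall>v\<in>L2 \<Omega>. (\<lambda>n. l2_inner \<Omega> (us n) v) \<longlonglongrightarrow> l2_inner \<Omega> w v)"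
    and r: "strict_mono \<rho>"
  show "(us \<circ> \<rho>) n \<in> L2 \<Omega>" for n using H by simp
  show "w \<in> L2 \<Omega>" using H by simp
  fix v assume v: "v \<in> L2 \<Omega>"
  have "((\<lambda>n. l2_inner \<Omega> (us n) v) \<circ> \<rho>) \<longlonglongrightarrow> l2_inner \<Omega> w v"
    using LIMSEQ_subseq_LIMSEQ[OF _ r] H v by blast
  then show "(\<lambda>n. l2_inner \<Omega> ((us \<circ> \<rho>) n) v) \<longlonglongrightarrow> l2_inner \<Omega> w v" by (simp add: o_def)
qed

lemma weak_pert:
  assumes fin: "finite_measure (lebesgue_on \<Omega>)"
    and wc: "weak_conv_L2 \<Omega> us w" and vsL: "\<And>n. vs n \<in> L2 \<Omega>"
    and small: "(\<lambda>n. NN \<Omega> (\<lambda>x. vs n x - us n x)) \<longlonglongrightarrow> 0"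
  shows "weak_conv_L2 \<Omega> vs w"
  unfolding weak_conv_L2_def
proof (intro conjI ballI allI vsL)
  have usL: "\<And>n. us n \<in> L2 \<Omega>" and wL: "w \<in> L2 \<Omega>"
    and lim: "\<And>v. v \<in> L2 \<Omega> \<Longrightarrow> (\<lambda>n. l2_inner \<Omega> (us n) v) \<longlonglongrightarrow> l2_inner \<Omega> w v"
    using wc unfolding weak_conv_L2_def by auto
  show "w \<in> L2 \<Omega>" by (rule wL)
  fix v assume v: "v \<in> L2 \<Omega>"
  have nl: "(\<lambda>n. l2_norm \<Omega> (\<lambda>x. vs n x - us n x)) \<longlonglongrightarrow> 0"
    unfolding l2_norm_def using tendsto_real_sqrt[OF small] by simp
  have "(\<lambda>n. l2_inner \<Omega> (\<lambda>x. vs n x - us n x) v) \<longlonglongrightarrow> 0"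
  proof (rule Lim_null_comparison)
    show "\<forall>\<^sub>F n in sequentially. norm (l2_inner \<Omega> (\<lambda>x. vs n x - us n x) v) \<le> l2_norm \<Omega> (\<lambda>x. vs n x - us n x) * l2_norm \<Omega> v"
      using CS[OF fin L2_diff[OF fin vsL usL] v] by (intro always_eventually allI) simp
    show "(\<lambda>n. l2_norm \<Omega> (\<lambda>x. vs n x - us n x) * l2_norm \<Omega> v) \<longlonglongrightarrow> 0"
      using tendsto_mult_left_zero[OF nl] .
  qed
  then have "(\<lambda>n. l2_inner \<Omega> (us n) v + l2_inner \<Omega> (\<lambda>x. vs n x - us n x) v) \<longlonglongrightarrow> l2_inner \<Omega> w v + 0"
    by (intro tendsto_add lim v)
  moreover have "l2_inner \<Omega> (us n) v + l2_inner \<Omega> (\<lambda>x. vs n x - us n x) v = l2_inner \<Omega> (vs n) v" for n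
    using inner_diff_left[OF fin v vsL usL] by simp
  ultimately show "(\<lambda>n. l2_inner \<Omega> (vs n) v) \<longlonglongrightarrow> l2_inner \<Omega> w v" by simp
qed

lemma sgn_mult_self: "(a::real) * sgn a = \<bar>a\<bar>"
  by (cases a "0::real" rule: linorder_cases) auto

context setting
begin

lemma d_lim: "(\<lambda>k. NN \<Omega> (d k)) \<longlonglongrightarrow> 0"
  by (rule summable_LIMSEQ_zero[OF summable_d])

lemma d_AE: "AE x in LM. (\<lambda>k. d k x) \<longlonglongrightarrow> 0"
  by (rule AE_tendsto_of_summable[OF L2_meas[OF fin dL2] L2_sq[OF fin dL2] summable_d])

lemma abs_L2: "h \<in> L2 \<Omega> \<Longrightarrow> (\<lambda>x. \<bar>h x\<bar>) \<in> L2 \<Omega>"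
proof -
  assume h: "h \<in> L2 \<Omega>"
  have [measurable]: "h \<in> borel_measurable LM" using h by (simp add: L2_def)
  have "(\<lambda>x. \<bar>h x\<bar>) \<in> borel_measurable LM" by measurable
  moreover have "integrable LM (\<lambda>x. \<bar>h x\<bar>\<^sup>2)" using L2_sq[OF fin h] by simp
  ultimately show ?thesis by (simp add: L2_def)
qed

end


context setting
begin

lemma main:
  assumes r: "strict_mono r" and wc: "weak_conv_L2 \<Omega> (u \<circ> r) us"
  shows "\<exists>r'. strict_mono r' \<and> (\<lambda>k. l1_dist \<Omega> (u (r' k)) us) \<longlonglongrightarrow> 0"
proof -
  have usL: "us \<in> L2 \<Omega>" using wc unfolding weak_conv_L2_def by blast
  have [measurable]: "us \<in> borel_measurable LM" using usL by (simp add: L2_def)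
  have um[measurable]: "u k \<in> borel_measurable LM" for k using uL2[of k] by (simp add: L2_def)
  define \<sigma> where "\<sigma> = (\<lambda>n. r (Suc n) - 1)"
  have rs: "Suc n \<le> r (Suc n)" for n using seq_suble[OF r] .
  have \<sigma>S: "Suc (\<sigma> n) = r (Suc n)" for n unfolding \<sigma>_def using rs[of n] by simp
  have \<sigma>m: "strict_mono \<sigma>"
  proof (rule strict_monoI)
    fix m n :: nat assume "m < n"
    then have "r (Suc m) < r (Suc n)" using r by (simp add: strict_mono_less)
    then show "\<sigma> m < \<sigma> n" using \<sigma>S[of m] \<sigma>S[of n] by simp
  qed
  have wc1: "weak_conv_L2 \<Omega> (\<lambda>n. u (Suc (\<sigma> n))) us"
  proof -
    have "weak_conv_L2 \<Omega> ((u \<circ> r) \<circ> Suc) us" by (rule weak_sub[OF wc]) (simp add: strict_mono_Suc_iff)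
    moreover have "(u \<circ> r) \<circ> Suc = (\<lambda>n. u (Suc (\<sigma> n)))" by (simp add: o_def \<sigma>S)
    ultimately show ?thesis by simp
  qed
  have wc2: "weak_conv_L2 \<Omega> (\<lambda>n. u (\<sigma> n)) us"
  proof (rule weak_pert[OF fin wc1 uL2])
    have "(\<lambda>n. NN \<Omega> (d (\<sigma> n))) \<longlonglongrightarrow> 0"
      using LIMSEQ_subseq_LIMSEQ[OF d_lim \<sigma>m] by (simp add: o_def)
    moreover have "NN \<Omega> (\<lambda>x. u (\<sigma> n) x - u (Suc (\<sigma> n)) x) = NN \<Omega> (d (\<sigma> n))" for n
      unfolding d_def by (simp add: power2_commute)
    ultimately show "(\<lambda>n. NN \<Omega> (\<lambda>x. u (\<sigma> n) x - u (Suc (\<sigma> n)) x)) \<longlonglongrightarrow> 0" by simp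
  qed
  define hg where "hg = (\<lambda>n x. g (u (\<sigma> n)) x - g us x)"
  have hgL: "hg n \<in> L2 \<Omega>" for n unfolding hg_def by (rule L2_diff[OF fin gL2[OF uL2] gL2[OF usL]])
  have gconv: "(\<lambda>n. l2_norm \<Omega> (hg n)) \<longlonglongrightarrow> 0"
    using cc wc2 unfolding completely_continuous_def hg_def by blast
  have L1g: "(\<lambda>n. \<integral>x. norm (hg n x) \<partial>LM) \<longlonglongrightarrow> 0"
  proof (rule Lim_null_comparison)
    show "(\<lambda>n. l2_norm \<Omega> (hg n) * l2_norm \<Omega> (\<lambda>x. 1)) \<longlonglongrightarrow> 0"
      by (rule tendsto_mult_left_zero[OF gconv])
    show "\<forall>\<^sub>F n in sequentially. norm (\<integral>x. norm (hg n x) \<partial>LM) \<le> l2_norm \<Omega> (hg n) * l2_norm \<Omega> (\<lambda>x. 1)"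
    proof (intro always_eventually allI)
      fix n
      have "\<bar>l2_inner \<Omega> (\<lambda>x. \<bar>hg n x\<bar>) (\<lambda>x. 1)\<bar> \<le> l2_norm \<Omega> (\<lambda>x. \<bar>hg n x\<bar>) * l2_norm \<Omega> (\<lambda>x. 1)"
        by (rule CS[OF fin abs_L2[OF hgL] L2_const[OF fin]])
      moreover have "l2_norm \<Omega> (\<lambda>x. \<bar>hg n x\<bar>) = l2_norm \<Omega> (hg n)" by (simp add: l2_norm_def)
      moreover have "l2_inner \<Omega> (\<lambda>x. \<bar>hg n x\<bar>) (\<lambda>x. 1) = (\<integral>x. norm (hg n x) \<partial>LM)"
        by (simp add: l2_inner_def)
      ultimately show "norm (\<integral>x. norm (hg n x) \<partial>LM) \<le> l2_norm \<Omega> (hg n) * l2_norm \<Omega> (\<lambda>x. 1)" by simp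
    qed
  qed
  obtain \<rho> :: "nat \<Rightarrow> nat" where \<rho>: "strict_mono \<rho>" and \<rho>AE: "AE x in LM. (\<lambda>n. hg (\<rho> n) x) \<longlonglongrightarrow> 0"
    using tendsto_L1_AE_subseq[OF L2_int[OF fin hgL] L1g] by blast
  define \<tau> where "\<tau> = (\<lambda>n. Suc (\<sigma> (\<rho> n)))"
  have \<sigma>\<rho>: "strict_mono (\<sigma> \<circ> \<rho>)" by (rule strict_mono_o[OF \<sigma>m \<rho>])
  have \<tau>m: "strict_mono \<tau>" using \<sigma>\<rho> unfolding \<tau>_def strict_mono_def by simp
  have \<tau>r: "\<tau> n = r (Suc (\<rho> n))" for n unfolding \<tau>_def using \<sigma>S by simp
  have \<tau>ge: "n \<le> \<tau> n" for n using seq_suble[OF \<tau>m] .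
  have \<tau>1: "1 \<le> \<tau> n" for n unfolding \<tau>_def by simp
  have AEM: "AE x in LM. \<forall>k. u (Suc k) x \<in> Ms L \<alpha> \<beta> p b (ck k x)"
    using pointwise_Ms by (simp add: AE_all_countable)
  have AEconv: "AE x in LM. \<exists>l. (\<lambda>n. u (\<tau> n) x) \<longlonglongrightarrow> l"
    using AEM d_AE \<rho>AE
  proof eventually_elim
    case (elim x)
    define v where "v = (\<lambda>k. u k x)"
    have vm: "v k = 0 \<or> m \<le> \<bar>v k\<bar>" if k1: "k \<ge> 1" for k
    proof -
      obtain j where j: "k = Suc j" using k1 by (cases k) auto
      have vM: "v k \<in> Ms L \<alpha> \<beta> p b (ck j x)" using elim(1) unfolding v_def j by blast
      show ?thesis
      proof (cases "v k" "0::real" rule: linorder_cases)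
        case greater then show ?thesis using pos_ge_m[OF vM] by simp
      next
        case less
        have "m \<le> - v k" using pos_ge_m[OF Ms_neg[OF vM]] less by simp
        then show ?thesis using less by simp
      qed simp
    qed
    have dconv: "(\<lambda>k. v (Suc k) - v k) \<longlonglongrightarrow> 0" using elim(2) unfolding v_def d_def .
    obtain N where N: "\<And>n. n \<ge> N \<Longrightarrow> sgn (v n) = sgn (v N)"
      using sign_stable[OF m_pos vm dconv] by blast
    define S where "S = (\<lambda>n. v (\<tau> n))"
    define C where "C = (\<lambda>n. ck (\<sigma> (\<rho> n)) x)"
    have SM: "S n \<in> Ms L \<alpha> \<beta> p b (C n)" for n
      using elim(1) unfolding S_def C_def \<tau>_def v_def by blast
    have dsub: "(\<lambda>n. d (\<sigma> (\<rho> n)) x) \<longlonglongrightarrow> 0"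
      using LIMSEQ_subseq_LIMSEQ[OF elim(2) \<sigma>\<rho>] by (simp add: o_def)
    have Ceq: "C n = L * (- d (\<sigma> (\<rho> n)) x) - (hg (\<rho> n) x + g us x)" for n
      unfolding C_def ck_def d_def hg_def by simp
    have Clim: "C \<longlonglongrightarrow> L * (- 0) - (0 + g us x)"
      unfolding Ceq by (intro tendsto_intros dsub elim(3))
    have sg: "sgn (S n) = sgn (S N)" if "n \<ge> N" for n
      using N[of "\<tau> n"] N[of "\<tau> N"] \<tau>ge[of n] \<tau>ge[of N] that unfolding S_def by simp
    have "\<exists>l. S \<longlonglongrightarrow> l" by (rule conv_gen[OF Clim SM sg])
    then show ?case unfolding S_def v_def .
  qed
  define V where "V = (\<lambda>x. lim (\<lambda>n. u (\<tau> n) x))"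
  have AEV: "AE x in LM. (\<lambda>n. u (\<tau> n) x) \<longlonglongrightarrow> V x"
    using AEconv by (rule eventually_mono) (metis V_def limI)
  have Vm[measurable]: "V \<in> borel_measurable LM" unfolding V_def by measurable
  obtain B where B: "\<And>k. k \<ge> 1 \<Longrightarrow> NN \<Omega> (u k) \<le> B" using u_bound by blast
  have V2: "integrable LM (\<lambda>x. (V x)\<^sup>2)"
    by (rule L2_of_AE_lim[OF _ Vm AEV]) (use L2_sq[OF fin uL2] B \<tau>1 in auto)
  have VL: "V \<in> L2 \<Omega>" using V2 by (simp add: L2_def)
  define h where "h = (\<lambda>n x. u (\<tau> n) x - V x)"
  have hL: "h n \<in> L2 \<Omega>" for n unfolding h_def by (rule L2_diff[OF fin uL2 VL])
  have hAE: "AE x in LM. (\<lambda>n. h n x) \<longlonglongrightarrow> 0"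
    using AEV by (rule eventually_mono) (auto simp: h_def intro: tendsto_eq_intros)
  have hb: "(\<integral>x. (h n x)\<^sup>2 \<partial>LM) \<le> 2 * B + 2 * NN \<Omega> V" for n
  proof -
    have "(\<integral>x. (h n x)\<^sup>2 \<partial>LM) \<le> (\<integral>x. 2 * (u (\<tau> n) x)\<^sup>2 + 2 * (V x)\<^sup>2 \<partial>LM)"
    proof (rule integral_mono)
      show "integrable LM (\<lambda>x. (h n x)\<^sup>2)" by (rule L2_sq[OF fin hL])
      show "integrable LM (\<lambda>x. 2 * (u (\<tau> n) x)\<^sup>2 + 2 * (V x)\<^sup>2)"
        using L2_sq[OF fin uL2[of "\<tau> n"]] V2 by simp
      fix x
      have "0 \<le> (u (\<tau> n) x + V x)\<^sup>2" by simp
      then show "(h n x)\<^sup>2 \<le> 2 * (u (\<tau> n) x)\<^sup>2 + 2 * (V x)\<^sup>2"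
        unfolding h_def by (simp add: power2_eq_square algebra_simps)
    qed
    also have "\<dots> = 2 * NN \<Omega> (u (\<tau> n)) + 2 * NN \<Omega> V"
      using L2_sq[OF fin uL2[of "\<tau> n"]] V2 by simp
    also have "\<dots> \<le> 2 * B + 2 * NN \<Omega> V" using B[OF \<tau>1[of n]] by simp
    finally show ?thesis .
  qed
  have L1: "(\<lambda>n. \<integral>x. \<bar>h n x\<bar> \<partial>LM) \<longlonglongrightarrow> 0"
    by (rule L1_of_AE[OF fin L2_meas[OF fin hL] hAE L2_sq[OF fin hL] hb])
  have wct: "weak_conv_L2 \<Omega> (u \<circ> \<tau>) us"
  proof -
    have "weak_conv_L2 \<Omega> ((u \<circ> r) \<circ> (Suc \<circ> \<rho>)) us"
      by (rule weak_sub[OF wc strict_mono_o]) (use \<rho> in \<open>auto simp: strict_mono_Suc_iff\<close>)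
    moreover have "(u \<circ> r) \<circ> (Suc \<circ> \<rho>) = u \<circ> \<tau>" by (simp add: o_def \<tau>r)
    ultimately show ?thesis by simp
  qed
  have VU: "AE x in LM. V x = us x"
  proof -
    define w where "w = (\<lambda>x. sgn (V x - us x))"
    have wm[measurable]: "w \<in> borel_measurable LM" unfolding w_def by measurable
    have w1: "\<bar>w x\<bar> \<le> 1" for x unfolding w_def by (simp add: abs_sgn_eq)
    have wL: "w \<in> L2 \<Omega>"
      unfolding L2_def
    proof (intro CollectI conjI wm)
      show "integrable LM (\<lambda>x. (w x)\<^sup>2)"
      proof (rule Bochner_Integration.integrable_bound[where f="\<lambda>x. 1::real"])
        show "integrable LM (\<lambda>x. 1::real)" using finite_measure.integrable_const[OF fin] .
        show "(\<lambda>x. (w x)\<^sup>2) \<in> borel_measurable LM" by measurable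
        show "AE x in LM. norm ((w x)\<^sup>2) \<le> norm (1::real)"
        proof (intro AE_I2)
          fix x
          have "\<bar>w x\<bar> * \<bar>w x\<bar> \<le> 1 * 1" using w1[of x] by (intro mult_mono) auto
          then show "norm ((w x)\<^sup>2) \<le> norm (1::real)" by (simp add: power2_eq_square abs_mult)
        qed
      qed
    qed
    have A1: "(\<lambda>n. l2_inner \<Omega> (u (\<tau> n)) w) \<longlonglongrightarrow> l2_inner \<Omega> us w"
      using wct wL unfolding weak_conv_L2_def by (auto simp: o_def)
    have A2: "(\<lambda>n. l2_inner \<Omega> (u (\<tau> n)) w - l2_inner \<Omega> V w) \<longlonglongrightarrow> 0"
    proof (rule Lim_null_comparison[OF _ L1])
      show "\<forall>\<^sub>F n in sequentially. norm (l2_inner \<Omega> (u (\<tau> n)) w - l2_inner \<Omega> V w) \<le> (\<integral>x. \<bar>h n x\<bar> \<partial>LM)"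
      proof (intro always_eventually allI)
        fix n
        have "l2_inner \<Omega> (u (\<tau> n)) w - l2_inner \<Omega> V w = l2_inner \<Omega> (h n) w"
          unfolding h_def using inner_diff_left[OF fin wL uL2 VL] by simp
        also have "\<bar>\<dots>\<bar> \<le> (\<integral>x. \<bar>h n x\<bar> \<partial>LM)"
          unfolding l2_inner_def
        proof (rule integral_abs_bound_integral)
          show "integrable LM (\<lambda>x. h n x * w x)" by (rule L2_prod[OF fin hL wL])
          show "integrable LM (\<lambda>x. \<bar>h n x\<bar>)" by (rule L2_int[OF fin abs_L2[OF hL]])
          fix x
          have "\<bar>h n x\<bar> * \<bar>w x\<bar> \<le> \<bar>h n x\<bar> * 1" using w1[of x] by (intro mult_left_mono) auto
          then show "\<bar>h n x * w x\<bar> \<le> \<bar>h n x\<bar>" by (simp add: abs_mult)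
        qed
        finally show "norm (l2_inner \<Omega> (u (\<tau> n)) w - l2_inner \<Omega> V w) \<le> (\<integral>x. \<bar>h n x\<bar> \<partial>LM)" by simp
      qed
    qed
    have "(\<lambda>n. (l2_inner \<Omega> (u (\<tau> n)) w - l2_inner \<Omega> V w) + l2_inner \<Omega> V w) \<longlonglongrightarrow> 0 + l2_inner \<Omega> V w"
      by (intro tendsto_add A2 tendsto_const)
    then have "(\<lambda>n. l2_inner \<Omega> (u (\<tau> n)) w) \<longlonglongrightarrow> l2_inner \<Omega> V w" by simp
    then have eq: "l2_inner \<Omega> V w = l2_inner \<Omega> us w" using A1 LIMSEQ_unique by blast
    have "l2_inner \<Omega> (\<lambda>x. V x - us x) w = 0"
      using inner_diff_left[OF fin wL VL usL] eq by simp
    then have z: "(\<integral>x. \<bar>V x - us x\<bar> \<partial>LM) = 0"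
      unfolding l2_inner_def w_def by (simp add: sgn_mult_self)
    have "AE x in LM. \<bar>V x - us x\<bar> = 0"
      using integral_nonneg_eq_0_iff_AE[OF L2_int[OF fin abs_L2[OF L2_diff[OF fin VL usL]]]] z by simp
    then show ?thesis by (rule eventually_mono) simp
  qed
  have "(\<lambda>k. l1_dist \<Omega> (u (\<tau> k)) us) = (\<lambda>n. \<integral>x. \<bar>h n x\<bar> \<partial>LM)"
  proof
    fix n
    show "l1_dist \<Omega> (u (\<tau> n)) us = (\<integral>x. \<bar>h n x\<bar> \<partial>LM)"
      unfolding l1_dist_def h_def
      by (rule integral_cong_AE) (use VU in \<open>auto elim: eventually_mono\<close>)
  qed
  then show ?thesis using L1 \<tau>m by auto
qed

end


theorem corollary5p2:
  fixes \<Omega> :: "'a::euclidean_space set"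
    and f :: "('a \<Rightarrow> real) \<Rightarrow> real" and g :: "('a \<Rightarrow> real) \<Rightarrow> 'a \<Rightarrow> real"
    and Lf L \<alpha> \<beta> p :: real and b :: ereal
    and u :: "nat \<Rightarrow> 'a \<Rightarrow> real"
  assumes "\<Omega> \<in> sets lebesgue" and "emeasure lebesgue \<Omega> < \<infinity>"
    and "assumption_A \<Omega> f g Lf"
    and "completely_continuous \<Omega> g"
    and "\<alpha> > 0" and "\<beta> > 0" and "0 < p" and "p < 1" and "b > 0"
    and "Lf < L" and "L \<le> (2 / p - 1) * \<alpha>"
    and "u 0 \<in> L2 \<Omega>"
    and "\<And>k. u (Suc k) \<in> admissible \<Omega> b \<and>
              (\<forall>v\<in>admissible \<Omega> b. subproblem_obj \<Omega> f g L \<alpha> \<beta> p (u k) (u (Suc k))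
                                    \<le> subproblem_obj \<Omega> f g L \<alpha> \<beta> p (u k) v)"
  shows "\<forall>ustar. (\<exists>r. strict_mono r \<and> weak_conv_L2 \<Omega> (u \<circ> r) ustar) \<longrightarrow>
           (\<exists>r. strict_mono r \<and> (\<lambda>k. l1_dist \<Omega> (u (r k)) ustar) \<longlonglongrightarrow> 0)"
proof (intro allI impI)
  fix ustar
  assume "\<exists>r. strict_mono r \<and> weak_conv_L2 \<Omega> (u \<circ> r) ustar"
  then obtain r where r: "strict_mono r" and wc: "weak_conv_L2 \<Omega> (u \<circ> r) ustar" by blast
  have em: "emeasure (lebesgue_on \<Omega>) \<Omega> = emeasure lebesgue \<Omega>"
    by (rule emeasure_restrict_space) (use assms(1) in auto)
  have fin: "finite_measure (lebesgue_on \<Omega>)"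
    by (rule finite_measureI) (use em assms(2) in simp)
  show "\<exists>r. strict_mono r \<and> (\<lambda>k. l1_dist \<Omega> (u (r k)) ustar) \<longlonglongrightarrow> 0"
  proof (cases "emeasure lebesgue \<Omega> = 0")
    case True
    have "\<Omega> \<in> null_sets (lebesgue_on \<Omega>)" using em True by (simp add: null_sets_def)
    then have AE: "AE x in lebesgue_on \<Omega>. False" by (rule AE_I') auto
    have "l1_dist \<Omega> (u k) ustar = 0" for k
      unfolding l1_dist_def by (rule integral_eq_zero_AE) (use AE in \<open>auto elim: eventually_mono\<close>)
    then show ?thesis by (intro exI[of _ id]) (auto simp: strict_mono_def)
  next
    case False
    have pos: "0 < measure (lebesgue_on \<Omega>) \<Omega>"
      using False assms(2) em by (simp add: measure_def enn2real_positive_iff zero_less_iff_neq_zero)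
    have Lf0: "Lf \<ge> 0"
    proof (rule ccontr)
      assume "\<not> Lf \<ge> 0"
      then have neg: "Lf < 0" by simp
      have "l2_norm \<Omega> (\<lambda>x. g (\<lambda>x. 1) x - g (\<lambda>x. 0) x) \<le> Lf * l2_norm \<Omega> (\<lambda>x. (\<lambda>x. 1::real) x - (\<lambda>x. 0) x)"
        using assms(3) L2_const[OF fin, of 1] L2_const[OF fin, of 0] unfolding assumption_A_def by blast
      moreover have "l2_norm \<Omega> (\<lambda>x. (\<lambda>x. 1::real) x - (\<lambda>x. 0) x) = sqrt (measure (lebesgue_on \<Omega>) \<Omega>)"
        unfolding l2_norm_def by simp
      moreover have "sqrt (measure (lebesgue_on \<Omega>) \<Omega>) > 0" using pos by simp
      ultimately have le: "l2_norm \<Omega> (\<lambda>x. g (\<lambda>x. 1) x - g (\<lambda>x. 0) x) \<le> Lf * sqrt (measure (lebesgue_on \<Omega>) \<Omega>)"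
        by simp
      have "Lf * sqrt (measure (lebesgue_on \<Omega>) \<Omega>) < 0"
        using neg pos by (simp add: mult_neg_pos)
      then have "l2_norm \<Omega> (\<lambda>x. g (\<lambda>x. 1) x - g (\<lambda>x. 0) x) < 0"
        using le by linarith
      moreover have "0 \<le> l2_norm \<Omega> (\<lambda>x. g (\<lambda>x. 1) x - g (\<lambda>x. 0) x)" by (rule l2_norm_nonneg)
      ultimately show False by linarith
    qed
    have L0: "L > 0" using assms(10) Lf0 by linarith
    interpret setting \<Omega> f g Lf L \<alpha> \<beta> p b u
      by (rule setting.intro[OF fin assms(3) assms(4) assms(5) assms(6) assms(7) assms(8) assms(9)
            assms(10) assms(11) L0 assms(12) assms(13)])
    show ?thesis by (rule main[OF r wc])
  qed
qed

end
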